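(* Let $\Sigma$ be an oriented piecewise smooth surface with position vector $X$. Then on $\Sigma^*$, $$\nabla\cdot J(X\times\xi)^T=2\gamma+\Lambda q,$$ and, if $\Lambda$ is constant on $\Sigma^*$, $$\nabla\cdot(d\xi+\Lambda I)J(X\times\xi)^T=\frac{2qK_\Sigma}{K_W}+\Lambda\gamma.$$
   Context: $\Sigma^*$ is the union of the smooth faces of $\Sigma$, $\nu$ its unit normal, $\nabla\cdot$ the surface divergence, $(\cdot)^T$ the tangential part, $J=\nu\times\cdot$ rotation by $90^\circ$ in the tangent plane, $I$ the identity. $\gamma$ is a positive $C^3$ function on $S^2$ (and $\gamma$ on $\Sigma^*$ means $\gamma\circ\nu$), $D\gamma$ its gradient on $S^2$, $\tilde\gamma$ its degree-one homogeneous extension; $\xi=\nabla\tilde\gamma(\nu)=D\gamma_\nu+\gamma\nu$ is the Cahn–Hoffman field, $d\xi$ regarded as an endomorphism of the tangent plane, $\Lambda=-\nabla\cdot\xi$ the anisotropic mean curvature, $q=X\cdot\nu$ the support function, $K_\Sigma$ the Gauss curvature of $\Sigma$, and $K_W=1/\det(D^2\gamma+\gamma I)$ at $\nu$, so $K_\Sigma/K_W=\det d\xi$. *)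

theory Defs
  imports "HOL-Analysis.Analysis"
begin

unbundle cross3_syntax

definition pd :: "('a::euclidean_space \<Rightarrow> 'b::real_normed_vector) \<Rightarrow> 'a \<Rightarrow> 'a \<Rightarrow> 'b" where
  "pd f e x = frechet_derivative f (at x) e"

fun Ck :: "nat \<Rightarrow> 'a::euclidean_space set \<Rightarrow> ('a \<Rightarrow> 'b::real_normed_vector) \<Rightarrow> bool" where
  "Ck 0 U f = continuous_on U f"
| "Ck (Suc k) U f = (f differentiable_on U \<and> continuous_on U f \<and>
      (\<forall>e\<in>Basis. Ck k U (\<lambda>x. pd f e x)))"

definition smooth_on :: "'a::euclidean_space set \<Rightarrow> ('a \<Rightarrow> 'b::real_normed_vector) \<Rightarrow> bool" where
  "smooth_on U f = (\<forall>k. Ck k U f)"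

definition Xd :: "(real^2 \<Rightarrow> real^3) \<Rightarrow> 2 \<Rightarrow> real^2 \<Rightarrow> real^3" where
  "Xd X i p = pd X (axis i 1) p"

definition gmat :: "(real^2 \<Rightarrow> real^3) \<Rightarrow> real^2 \<Rightarrow> real^2^2" where
  "gmat X p = (\<chi> i j. Xd X i p \<bullet> Xd X j p)"

definition ginv :: "(real^2 \<Rightarrow> real^3) \<Rightarrow> real^2 \<Rightarrow> real^2^2" where
  "ginv X p = matrix_inv (gmat X p)"

definition nu :: "(real^2 \<Rightarrow> real^3) \<Rightarrow> real^2 \<Rightarrow> real^3" where
  "nu X p = (1 / norm (Xd X 1 p \<times> Xd X 2 p)) *\<^sub>R (Xd X 1 p \<times> Xd X 2 p)"

definition sdiv :: "(real^2 \<Rightarrow> real^3) \<Rightarrow> (real^2 \<Rightarrow> real^3) \<Rightarrow> real^2 \<Rightarrow> real" where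
  "sdiv X V p = (\<Sum>i\<in>UNIV. \<Sum>j\<in>UNIV. ginv X p $ i $ j * (pd V (axis i 1) p \<bullet> Xd X j p))"

definition tanpart :: "(real^2 \<Rightarrow> real^3) \<Rightarrow> real^2 \<Rightarrow> real^3 \<Rightarrow> real^3" where
  "tanpart X p w = w - (w \<bullet> nu X p) *\<^sub>R nu X p"

definition Jrot :: "(real^2 \<Rightarrow> real^3) \<Rightarrow> real^2 \<Rightarrow> real^3 \<Rightarrow> real^3" where
  "Jrot X p w = nu X p \<times> w"

definition supp :: "(real^2 \<Rightarrow> real^3) \<Rightarrow> real^2 \<Rightarrow> real" where
  "supp X p = X p \<bullet> nu X p"

definition gauss_curv :: "(real^2 \<Rightarrow> real^3) \<Rightarrow> real^2 \<Rightarrow> real" where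
  "gauss_curv X p = det (\<chi> i j. - (pd (nu X) (axis i 1) p \<bullet> Xd X j p)) / det (gmat X p)"

text \<open>The function gamma on S^2 is represented by gam (only its values on the unit sphere matter).\<close>

definition gam0 :: "(real^3 \<Rightarrow> real) \<Rightarrow> real^3 \<Rightarrow> real" where
  "gam0 gam x = gam ((1 / norm x) *\<^sub>R x)"

definition gamt :: "(real^3 \<Rightarrow> real) \<Rightarrow> real^3 \<Rightarrow> real" where
  "gamt gam x = norm x * gam ((1 / norm x) *\<^sub>R x)"

definition grad3 :: "(real^3 \<Rightarrow> real) \<Rightarrow> real^3 \<Rightarrow> real^3" where
  "grad3 f x = (\<chi> k. pd f (axis k 1) x)"

definition hess3 :: "(real^3 \<Rightarrow> real) \<Rightarrow> real^3 \<Rightarrow> real^3^3" where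
  "hess3 f x = (\<chi> i j. pd (\<lambda>y. pd f (axis j 1) y) (axis i 1) x)"

definition projn :: "real^3 \<Rightarrow> real^3^3" where
  "projn n = mat 1 - (\<chi> i j. n $ i * n $ j)"

text \<open>D^2 gamma + gamma I at n, an endomorphism of n^perp (Riemannian Hessian on S^2,
  computed via the degree-zero extension); its determinant on n^perp is the determinant of
  the 3x3 map extended by the identity in direction n.\<close>
definition det_hess_gam :: "(real^3 \<Rightarrow> real) \<Rightarrow> real^3 \<Rightarrow> real" where
  "det_hess_gam gam n = det (projn n ** hess3 (gam0 gam) n ** projn n + gam n *\<^sub>R projn n
                              + (\<chi> i j. n $ i * n $ j))"

definition KW :: "(real^3 \<Rightarrow> real) \<Rightarrow> real^3 \<Rightarrow> real" where
  "KW gam n = 1 / det_hess_gam gam n"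

definition xi :: "(real^3 \<Rightarrow> real) \<Rightarrow> (real^2 \<Rightarrow> real^3) \<Rightarrow> real^2 \<Rightarrow> real^3" where
  "xi gam X p = grad3 (gamt gam) (nu X p)"

definition Lam :: "(real^3 \<Rightarrow> real) \<Rightarrow> (real^2 \<Rightarrow> real^3) \<Rightarrow> real^2 \<Rightarrow> real" where
  "Lam gam X p = - sdiv X (xi gam X) p"

definition dxi_apply :: "(real^3 \<Rightarrow> real) \<Rightarrow> (real^2 \<Rightarrow> real^3) \<Rightarrow> real^2 \<Rightarrow> real^3 \<Rightarrow> real^3" where
  "dxi_apply gam X p w =
     (\<Sum>i\<in>UNIV. (\<Sum>j\<in>UNIV. ginv X p $ i $ j * (w \<bullet> Xd X j p)) *\<^sub>R pd (xi gam X) (axis i 1) p)"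

end

theory Submission
  imports Defs
begin

unbundle cross3_syntax

lemma bounded_bilinear_cross: "bounded_bilinear (\<lambda>x y::real^3. x \<times> y)"
  using bilinear_cross bilinear_conv_bounded_bilinear by blast

lemmas has_derivative_cross = bounded_bilinear.FDERIV[OF bounded_bilinear_cross]

lemma differentiable_cross:
  "f differentiable (at x) \<Longrightarrow> g differentiable (at x) \<Longrightarrow> (\<lambda>x. f x \<times> g x) differentiable (at x)"
  unfolding differentiable_def by (blast intro: has_derivative_cross)

lemma has_derivative_vec3:
  fixes F :: "3 \<Rightarrow> 'a::real_normed_vector \<Rightarrow> real"
  assumes "\<And>k. (F k has_derivative F' k) (at x)"
  shows "((\<lambda>y. \<chi> k. F k y) has_derivative (\<lambda>v. \<chi> k. F' k v)) (at x)"
  using assms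
  by (subst has_derivative_componentwise_within) (auto simp: Basis_vec_def inner_axis)

lemma differentiable_vec3:
  fixes F :: "3 \<Rightarrow> 'a::real_normed_vector \<Rightarrow> real"
  assumes "\<And>k. F k differentiable (at x)"
  shows "(\<lambda>y. \<chi> k. F k y) differentiable (at x)"
proof -
  from assms obtain F' where "\<And>k. (F k has_derivative F' k) (at x)"
    unfolding differentiable_def by metis
  then show ?thesis unfolding differentiable_def by (blast intro: has_derivative_vec3)
qed

lemma pd_has: "f differentiable (at x) \<Longrightarrow> (f has_derivative (\<lambda>v. pd f v x)) (at x)"
  unfolding pd_def using frechet_derivative_works by (metis eta_contract_eq)

lemma pd_eq: "(f has_derivative f') (at x) \<Longrightarrow> pd f v x = f' v"
  unfolding pd_def using frechet_derivative_at by metis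

lemma pd_linear: "f differentiable (at x) \<Longrightarrow> linear (\<lambda>v. pd f v x)"
  using pd_has has_derivative_linear by blast

lemma pd_cong_open:
  assumes "open S" "x \<in> S" "\<And>y. y \<in> S \<Longrightarrow> f y = g y"
  shows "pd f v x = pd g v x"
proof -
  have "(f has_derivative D) (at x) \<longleftrightarrow> (g has_derivative D) (at x)" for D
    using has_derivative_transform_within_open[of f D x UNIV S g] has_derivative_transform_within_open[of g D x UNIV S f] assms
    by auto
  then show ?thesis unfolding pd_def frechet_derivative_def by simp
qed

lemma differentiable_cong_open:
  assumes "open S" "x \<in> S" "\<And>y. y \<in> S \<Longrightarrow> f y = g y" "f differentiable (at x)"
  shows "g differentiable (at x)"
  using assms unfolding differentiable_def
  by (metis has_derivative_transform_within_open)

lemma pd_const[simp]: "pd (\<lambda>x. c) v x = 0"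
  by (rule pd_eq) (rule has_derivative_const)

lemma pd_add: "f differentiable (at x) \<Longrightarrow> g differentiable (at x) \<Longrightarrow>
   pd (\<lambda>x. f x + g x) v x = pd f v x + pd g v x"
  by (rule pd_eq) (intro has_derivative_add pd_has)

lemma pd_diff: "f differentiable (at x) \<Longrightarrow> g differentiable (at x) \<Longrightarrow>
   pd (\<lambda>x. f x - g x) v x = pd f v x - pd g v x"
  by (rule pd_eq) (intro has_derivative_diff pd_has)

lemma pd_minus: "f differentiable (at x) \<Longrightarrow> pd (\<lambda>x. - f x) v x = - pd f v x"
  by (rule pd_eq) (intro has_derivative_minus pd_has)

lemma pd_mult: "f differentiable (at x) \<Longrightarrow> g differentiable (at x) \<Longrightarrow>
   pd (\<lambda>x. f x * g x :: real) v x = f x * pd g v x + pd f v x * g x"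
  by (rule pd_eq) (intro has_derivative_mult pd_has)

lemma pd_scaleR: "f differentiable (at x) \<Longrightarrow> g differentiable (at x) \<Longrightarrow>
   pd (\<lambda>x. f x *\<^sub>R g x) v x = f x *\<^sub>R pd g v x + pd f v x *\<^sub>R g x"
  by (rule pd_eq) (intro has_derivative_scaleR pd_has)

lemma pd_inner: "f differentiable (at x) \<Longrightarrow> g differentiable (at x) \<Longrightarrow>
   pd (\<lambda>x. f x \<bullet> g x) v x = f x \<bullet> pd g v x + pd f v x \<bullet> g x"
  by (rule pd_eq) (intro has_derivative_inner pd_has)

lemma pd_cross: "f differentiable (at x) \<Longrightarrow> g differentiable (at x) \<Longrightarrow>
   pd (\<lambda>x. f x \<times> g x) v x = f x \<times> pd g v x + pd f v x \<times> g x"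
  by (rule pd_eq) (intro has_derivative_cross pd_has)

lemma pd_chain: "g differentiable (at x) \<Longrightarrow> f differentiable (at (g x)) \<Longrightarrow>
   pd (\<lambda>x. f (g x)) v x = pd f (pd g v x) (g x)"
  by (rule pd_eq) (intro has_derivative_compose[of g _ x UNIV f] pd_has)

lemma pd_vec3: fixes F :: "3 \<Rightarrow> 'a::euclidean_space \<Rightarrow> real" assumes "\<And>k. F k differentiable (at x)"
  shows "pd (\<lambda>y. \<chi> k::3. F k y) v x = (\<chi> k. pd (F k) v x)"
proof -
  have "((\<lambda>y. \<chi> k::3. F k y) has_derivative (\<lambda>v. \<chi> k. pd (F k) v x)) (at x)"
    by (rule has_derivative_vec3) (rule pd_has[OF assms])
  then show ?thesis by (rule pd_eq)
qed

lemma pd_nth: assumes "f differentiable (at x)" shows "pd (\<lambda>y. f y $ k) v x = pd f v x $ k"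
proof -
  have "((\<lambda>y. f y $ k) has_derivative (\<lambda>v. pd f v x $ k)) (at x)"
    using bounded_linear.has_derivative[OF bounded_linear_vec_nth pd_has[OF assms]] .
  then show ?thesis by (rule pd_eq)
qed

lemma pd_norm: assumes "(x::'a::euclidean_space) \<noteq> 0" shows "pd norm v x = (v \<bullet> x) / norm x"
proof -
  have "(norm has_derivative (\<lambda>h. h \<bullet> sgn x)) (at x)" using has_derivative_norm[OF assms] .
  then have "pd norm v x = v \<bullet> sgn x" by (rule pd_eq)
  then show ?thesis by (simp add: sgn_div_norm divide_inverse mult.commute)
qed

lemma pd_scale: "f differentiable (at x) \<Longrightarrow> pd f (c *\<^sub>R v) x = c *\<^sub>R pd f v x"
  using pd_linear linear_scale by blast

lemma pd_lin_add: "f differentiable (at x) \<Longrightarrow> pd f (v + w) x = pd f v x + pd f w x"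
  using pd_linear linear_add by blast

lemma phi_deriv:
  fixes f :: "'a::euclidean_space \<Rightarrow> real"
  assumes "f differentiable (at (a + s *\<^sub>R u))" "f differentiable (at (b + s *\<^sub>R u))"
  shows "((\<lambda>s. f (a + s *\<^sub>R u) - f (b + s *\<^sub>R u)) has_derivative
          (\<lambda>t. t * (pd f u (a + s *\<^sub>R u) - pd f u (b + s *\<^sub>R u)))) (at s within T)"
proof -
  have l: "((\<lambda>s. c + s *\<^sub>R u) has_derivative (\<lambda>t. t *\<^sub>R u)) (at s within T)" for c
    by (auto intro!: derivative_eq_intros)
  have A: "((\<lambda>s. f (a + s *\<^sub>R u)) has_derivative (\<lambda>t. pd f (t *\<^sub>R u) (a + s *\<^sub>R u))) (at s within T)"
    using has_derivative_compose[OF l pd_has[OF assms(1)]] .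
  have B: "((\<lambda>s. f (b + s *\<^sub>R u)) has_derivative (\<lambda>t. pd f (t *\<^sub>R u) (b + s *\<^sub>R u))) (at s within T)"
    using has_derivative_compose[OF l pd_has[OF assms(2)]] .
  show ?thesis
    using has_derivative_diff[OF A B] pd_scale[OF assms(1)] pd_scale[OF assms(2)]
    by (simp add: right_diff_distrib)
qed

lemma young_aux:
  fixes f :: "'a::euclidean_space \<Rightarrow> real"
  assumes S: "open S" "p \<in> S" and df: "\<And>y. y \<in> S \<Longrightarrow> f differentiable (at y)"
    and du: "(\<lambda>y. pd f u y) differentiable (at p)" and e: "e > 0"
  shows "\<exists>d>0. \<forall>h. 0 < h \<and> h < d \<longrightarrow>
     \<bar>(f (p + h *\<^sub>R u + h *\<^sub>R w) - f (p + h *\<^sub>R u) - f (p + h *\<^sub>R w) + f p)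
        - h\<^sup>2 * pd (\<lambda>y. pd f u y) w p\<bar> \<le> e * h\<^sup>2 * (2 * norm u + norm w)"
proof -
  define g where "g = (\<lambda>y. pd f u y)"
  define G where "G = (\<lambda>v. pd g v p)"
  have gG: "(g has_derivative G) (at p)" unfolding G_def g_def using pd_has[OF du] by simp
  have linG: "linear G" using gG has_derivative_linear by blast
  obtain \<delta> where \<delta>: "\<delta> > 0" "\<And>x'. 0 < norm (x' - p) \<and> norm (x' - p) < \<delta> \<Longrightarrow>
      norm (g x' - g p - G (x' - p)) / norm (x' - p) < e"
    using gG[unfolded has_derivative_at'] e by blast
  have rem: "\<bar>g x' - g p - G (x' - p)\<bar> \<le> e * norm (x' - p)" if "norm (x' - p) < \<delta>" for x'
  proof (cases "x' = p")
    case True then show ?thesis using linear_0[OF linG] by simp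
  next
    case False
    then have "norm (x' - p) > 0" by simp
    with \<delta>(2)[of x'] that have "norm (g x' - g p - G (x' - p)) / norm (x' - p) < e" by simp
    with \<open>norm (x' - p) > 0\<close> show ?thesis by (simp add: field_simps)
  qed
  obtain r where r: "r > 0" "ball p r \<subseteq> S" using S openE by blast
  have pos1: "norm u + norm w + 1 > 0" by (simp add: add_nonneg_pos)
  define d where "d = min \<delta> r / (norm u + norm w + 1)"
  have dpos: "d > 0" proof -
    have "norm u + norm w + 1 > 0" by (simp add: add_nonneg_pos)
    then show ?thesis unfolding d_def using \<delta> r by simp
  qed
  show ?thesis
  proof (intro exI conjI allI impI, fact dpos)
    fix h :: real assume h: "0 < h \<and> h < d"
    have hb: "h * (norm u + norm w) < min \<delta> r"
    proof -
      have "h * (norm u + norm w) \<le> h * (norm u + norm w + 1)" using h by simp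
      also have "\<dots> < d * (norm u + norm w + 1)"
        using h pos1 by (intro mult_strict_right_mono) auto
      also have "\<dots> = min \<delta> r" unfolding d_def using pos1 by simp
      finally show ?thesis .
    qed
    have close: "norm ((p + s *\<^sub>R u + t *\<^sub>R w) - p) < min \<delta> r"
      if "0 \<le> s" "s \<le> h" "0 \<le> t" "t \<le> h" for s t
    proof -
      have "norm ((p + s *\<^sub>R u + t *\<^sub>R w) - p) \<le> s * norm u + t * norm w"
        using that norm_triangle_ineq[of "s *\<^sub>R u" "t *\<^sub>R w"] by simp
      also have "\<dots> \<le> h * norm u + h * norm w"
        using that by (intro add_mono mult_right_mono) auto
      also have "\<dots> < min \<delta> r" using hb by (simp add: distrib_left)
      finally show ?thesis .
    qed
    have inS: "p + s *\<^sub>R u + t *\<^sub>R w \<in> S" if "0 \<le> s" "s \<le> h" "0 \<le> t" "t \<le> h" for s t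
    proof -
      have "dist p (p + s *\<^sub>R u + t *\<^sub>R w) < r" using close[OF that]
        by (simp add: dist_norm norm_minus_commute add.commute)
      then show ?thesis using r(2) by auto
    qed
    define \<phi> where "\<phi> = (\<lambda>s. f ((p + h *\<^sub>R w) + s *\<^sub>R u) - f (p + s *\<^sub>R u))"
    have "\<forall>s\<in>{0..h}. (\<phi> has_derivative (\<lambda>t. t * (g ((p + h *\<^sub>R w) + s *\<^sub>R u) - g (p + s *\<^sub>R u))))
                       (at s within {0..h})"
    proof
      fix s assume s: "s \<in> {0..h}"
      have 1: "f differentiable (at ((p + h *\<^sub>R w) + s *\<^sub>R u))"
        using df inS[of s h] s h by (simp add: algebra_simps)
      have 2: "f differentiable (at (p + s *\<^sub>R u))"
        using df inS[of s 0] s h by simp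
      show "(\<phi> has_derivative (\<lambda>t. t * (g ((p + h *\<^sub>R w) + s *\<^sub>R u) - g (p + s *\<^sub>R u)))) (at s within {0..h})"
        unfolding \<phi>_def g_def by (rule phi_deriv[OF 1 2])
    qed
    note D = this
    obtain \<theta> where \<theta>: "\<theta> \<in> {0<..<h}"
      "\<phi> h - \<phi> 0 = (h - 0) * (g ((p + h *\<^sub>R w) + \<theta> *\<^sub>R u) - g (p + \<theta> *\<^sub>R u))"
    proof -
      from mvt_simple[of 0 h \<phi> "\<lambda>s t. t * (g ((p + h *\<^sub>R w) + s *\<^sub>R u) - g (p + s *\<^sub>R u))"] h D
      obtain x where "x \<in> {0<..<h}" "\<phi> h - \<phi> 0 = h * (g ((p + h *\<^sub>R w) + x *\<^sub>R u) - g (p + x *\<^sub>R u))"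
        by auto
      then show ?thesis using that by simp
    qed
    have phiD: "\<phi> h - \<phi> 0 = f (p + h *\<^sub>R u + h *\<^sub>R w) - f (p + h *\<^sub>R u) - f (p + h *\<^sub>R w) + f p"
      unfolding \<phi>_def by (simp add: algebra_simps)
    define q1 where "q1 = p + \<theta> *\<^sub>R u + h *\<^sub>R w"
    define q0 where "q0 = p + \<theta> *\<^sub>R u + 0 *\<^sub>R w"
    have n1: "norm (q1 - p) < \<delta>" and n0: "norm (q0 - p) < \<delta>"
      using close[of \<theta> h] close[of \<theta> 0] \<theta> h unfolding q1_def q0_def by auto
    have r1: "\<bar>g q1 - g p - G (q1 - p)\<bar> \<le> e * norm (q1 - p)" using rem[OF n1] .
    have r0: "\<bar>g q0 - g p - G (q0 - p)\<bar> \<le> e * norm (q0 - p)" using rem[OF n0] .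
    have nq1: "norm (q1 - p) \<le> h * norm u + h * norm w"
    proof -
      have "norm (q1 - p) \<le> \<theta> * norm u + h * norm w"
        unfolding q1_def using norm_triangle_ineq[of "\<theta> *\<^sub>R u" "h *\<^sub>R w"] \<theta> h by simp
      also have "\<dots> \<le> h * norm u + h * norm w" using \<theta> by (intro add_mono mult_right_mono) auto
      finally show ?thesis .
    qed
    have nq0: "norm (q0 - p) \<le> h * norm u"
      unfolding q0_def using \<theta> by (simp add: mult_right_mono)
    have Gd: "G (q1 - p) - G (q0 - p) = h * G w"
    proof -
      have "q1 - p - (q0 - p) = h *\<^sub>R w" unfolding q1_def q0_def by simp
      then have "G (q1 - p) - G (q0 - p) = G (h *\<^sub>R w)"
        by (metis linear_diff[OF linG])
      also have "\<dots> = h * G w" using linear_scale[OF linG] by simp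
      finally show ?thesis .
    qed
    have eq: "g ((p + h *\<^sub>R w) + \<theta> *\<^sub>R u) - g (p + \<theta> *\<^sub>R u) = g q1 - g q0"
      unfolding q1_def q0_def by (simp add: algebra_simps)
    have "\<bar>(g q1 - g q0) - h * G w\<bar> \<le> e * (h * norm u + h * norm w) + e * (h * norm u)"
    proof -
      have "\<bar>(g q1 - g q0) - h * G w\<bar> = \<bar>(g q1 - g p - G (q1 - p)) - (g q0 - g p - G (q0 - p))\<bar>"
        using Gd by (simp add: algebra_simps)
      also have "\<dots> \<le> \<bar>g q1 - g p - G (q1 - p)\<bar> + \<bar>g q0 - g p - G (q0 - p)\<bar>" by linarith
      also have "\<dots> \<le> e * (h * norm u + h * norm w) + e * (h * norm u)"
        using r1 r0 nq1 nq0 e by (smt (verit) mult_left_mono)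
      finally show ?thesis .
    qed
    then have bound: "\<bar>(g q1 - g q0) - h * G w\<bar> \<le> e * h * (2 * norm u + norm w)"
      by (simp add: algebra_simps)
    have "\<bar>(f (p + h *\<^sub>R u + h *\<^sub>R w) - f (p + h *\<^sub>R u) - f (p + h *\<^sub>R w) + f p) - h\<^sup>2 * G w\<bar>
          = h * \<bar>(g q1 - g q0) - h * G w\<bar>"
    proof -
      have "f (p + h *\<^sub>R u + h *\<^sub>R w) - f (p + h *\<^sub>R u) - f (p + h *\<^sub>R w) + f p = h * (g q1 - g q0)"
        using \<theta>(2) phiD eq by simp
      then have "(f (p + h *\<^sub>R u + h *\<^sub>R w) - f (p + h *\<^sub>R u) - f (p + h *\<^sub>R w) + f p) - h\<^sup>2 * G w
         = h * ((g q1 - g q0) - h * G w)" by (simp add: power2_eq_square algebra_simps)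
      then show ?thesis using h by (simp add: abs_mult)
    qed
    also have "\<dots> \<le> h * (e * h * (2 * norm u + norm w))"
      using bound h by (intro mult_left_mono) auto
    finally show "\<bar>(f (p + h *\<^sub>R u + h *\<^sub>R w) - f (p + h *\<^sub>R u) - f (p + h *\<^sub>R w) + f p)
        - h\<^sup>2 * pd (\<lambda>y. pd f u y) w p\<bar> \<le> e * h\<^sup>2 * (2 * norm u + norm w)"
      unfolding G_def g_def by (simp add: power2_eq_square algebra_simps)
  qed
qed

lemma differentiable_nth: "f differentiable (at x) \<Longrightarrow> (\<lambda>y. f y $ k) differentiable (at x)"
  unfolding differentiable_def using bounded_linear.has_derivative[OF bounded_linear_vec_nth] by blast

lemma young_real:
  fixes f :: "'a::euclidean_space \<Rightarrow> real"
  assumes S: "open S" "p \<in> S" and df: "\<And>y. y \<in> S \<Longrightarrow> f differentiable (at y)"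
    and du: "(\<lambda>y. pd f u y) differentiable (at p)" and dw: "(\<lambda>y. pd f w y) differentiable (at p)"
  shows "pd (\<lambda>y. pd f u y) w p = pd (\<lambda>y. pd f w y) u p"
proof (rule ccontr)
  define a where "a = pd (\<lambda>y. pd f u y) w p"
  define b where "b = pd (\<lambda>y. pd f w y) u p"
  assume "\<not> ?thesis"
  then have ab: "\<bar>a - b\<bar> > 0" unfolding a_def b_def by simp
  define C where "C = 3 * (norm u + norm w) + 1"
  have Cpos: "C > 0" unfolding C_def by (simp add: add_nonneg_pos)
  define e where "e = \<bar>a - b\<bar> / (2 * C)"
  have e: "e > 0" unfolding e_def using ab Cpos by simp
  obtain d1 where d1: "d1 > 0" "\<forall>h. 0 < h \<and> h < d1 \<longrightarrow>
     \<bar>(f (p + h *\<^sub>R u + h *\<^sub>R w) - f (p + h *\<^sub>R u) - f (p + h *\<^sub>R w) + f p)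
        - h\<^sup>2 * a\<bar> \<le> e * h\<^sup>2 * (2 * norm u + norm w)"
    using young_aux[OF S df du e, of w] unfolding a_def by blast
  obtain d2 where d2: "d2 > 0" "\<forall>h. 0 < h \<and> h < d2 \<longrightarrow>
     \<bar>(f (p + h *\<^sub>R w + h *\<^sub>R u) - f (p + h *\<^sub>R w) - f (p + h *\<^sub>R u) + f p)
        - h\<^sup>2 * b\<bar> \<le> e * h\<^sup>2 * (2 * norm w + norm u)"
    using young_aux[OF S df dw e, of u] unfolding b_def by blast
  define h where "h = min d1 d2 / 2"
  have h: "0 < h" "h < d1" "h < d2" unfolding h_def using d1 d2 by auto
  define \<Delta> where "\<Delta> = f (p + h *\<^sub>R u + h *\<^sub>R w) - f (p + h *\<^sub>R u) - f (p + h *\<^sub>R w) + f p"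
  have A: "\<bar>\<Delta> - h\<^sup>2 * a\<bar> \<le> e * h\<^sup>2 * (2 * norm u + norm w)"
    using d1(2) h unfolding \<Delta>_def by blast
  have B: "\<bar>\<Delta> - h\<^sup>2 * b\<bar> \<le> e * h\<^sup>2 * (2 * norm w + norm u)"
    using d2(2) h unfolding \<Delta>_def by (simp add: algebra_simps)
  have "h\<^sup>2 * \<bar>a - b\<bar> = \<bar>(\<Delta> - h\<^sup>2 * b) - (\<Delta> - h\<^sup>2 * a)\<bar>"
  proof -
    have "(\<Delta> - h\<^sup>2 * b) - (\<Delta> - h\<^sup>2 * a) = h\<^sup>2 * (a - b)" by (simp add: algebra_simps)
    then show ?thesis by (simp add: abs_mult)
  qed
  also have "\<dots> \<le> e * h\<^sup>2 * (2 * norm u + norm w) + e * h\<^sup>2 * (2 * norm w + norm u)"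
    using A B by linarith
  also have "\<dots> = h\<^sup>2 * (e * (3 * (norm u + norm w)))" by (simp add: algebra_simps)
  also have "\<dots> < h\<^sup>2 * (e * C)"
    using h e unfolding C_def by (intro mult_strict_left_mono) auto
  also have "\<dots> = h\<^sup>2 * (\<bar>a - b\<bar> / 2)" unfolding e_def using Cpos by simp
  finally show False using ab h by simp
qed

lemma young_vec:
  fixes f :: "'a::euclidean_space \<Rightarrow> real^3"
  assumes S: "open S" "p \<in> S" and df: "\<And>y. y \<in> S \<Longrightarrow> f differentiable (at y)"
    and du: "(\<lambda>y. pd f u y) differentiable (at p)" and dw: "(\<lambda>y. pd f w y) differentiable (at p)"
  shows "pd (\<lambda>y. pd f u y) w p = pd (\<lambda>y. pd f w y) u p"
proof -
  have "pd (\<lambda>y. pd f u y) w p $ c = pd (\<lambda>y. pd f w y) u p $ c" for c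
  proof -
    define fc where "fc = (\<lambda>y. f y $ c)"
    have dfc: "\<And>y. y \<in> S \<Longrightarrow> fc differentiable (at y)"
      unfolding fc_def using df differentiable_nth by blast
    have eqv: "\<And>v y. y \<in> S \<Longrightarrow> pd fc v y = pd f v y $ c"
      unfolding fc_def using df pd_nth by blast
    have dv: "(\<lambda>y. pd f v y) differentiable (at p) \<Longrightarrow> (\<lambda>y. pd fc v y) differentiable (at p)" for v
    proof -
      assume a: "(\<lambda>y. pd f v y) differentiable (at p)"
      have "(\<lambda>y. pd f v y $ c) differentiable (at p)"
        using a differentiable_nth by blast
      then show ?thesis using differentiable_cong_open[OF S(1) S(2), of "\<lambda>y. pd f v y $ c"] eqv by metis
    qed
    have "pd (\<lambda>y. pd fc u y) w p = pd (\<lambda>y. pd fc w y) u p"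
      by (rule young_real[OF S dfc dv[OF du] dv[OF dw]])
    moreover have "pd (\<lambda>y. pd fc v y) z p = pd (\<lambda>y. pd f v y) z p $ c"
      if "(\<lambda>y. pd f v y) differentiable (at p)" for v z
    proof -
      have "pd (\<lambda>y. pd fc v y) z p = pd (\<lambda>y. pd f v y $ c) z p"
        using pd_cong_open[OF S(1) S(2), of "\<lambda>y. pd fc v y" "\<lambda>y. pd f v y $ c"] eqv by blast
      also have "\<dots> = pd (\<lambda>y. pd f v y) z p $ c" using pd_nth[OF that] .
      finally show ?thesis .
    qed
    ultimately show ?thesis using du dw by simp
  qed
  then show ?thesis by (simp add: vec_eq_iff)
qed

lemma Ck_cont: "Ck k U f \<Longrightarrow> continuous_on U f"
  by (cases k) (simp_all only: Ck.simps)

lemma Ck_mono: "Ck (Suc k) U f \<Longrightarrow> Ck k U f"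
proof (induction k arbitrary: f)
  case 0 then show ?case by simp
next
  case (Suc k)
  have "f differentiable_on U" "continuous_on U f" "\<forall>e\<in>Basis. Ck (Suc k) U (\<lambda>x. pd f e x)"
    using Suc.prems unfolding Ck.simps(2)[of "Suc k"] by blast+
  then show ?case using Suc.IH unfolding Ck.simps(2)[of k] by blast
qed

lemma Ck_le: "Ck k U f \<Longrightarrow> j \<le> k \<Longrightarrow> Ck j U f"
proof (induction k)
  case 0 then show ?case by simp
next
  case (Suc k) then show ?case using Ck_mono le_Suc_eq by blast
qed

lemma Ck_diff_at: "Ck (Suc k) U f \<Longrightarrow> open U \<Longrightarrow> x \<in> U \<Longrightarrow> f differentiable (at x)"
  using differentiable_on_eq_differentiable_at unfolding Ck.simps(2)[of k] by blast

lemma Ck_pd: "Ck (Suc k) U f \<Longrightarrow> e \<in> Basis \<Longrightarrow> Ck k U (\<lambda>x. pd f e x)"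
  unfolding Ck.simps(2)[of k] by blast

lemma Ck_SucD: "Ck (Suc k) U f \<Longrightarrow> f differentiable_on U \<and> continuous_on U f \<and> (\<forall>e\<in>Basis. Ck k U (\<lambda>x. pd f e x))"
  unfolding Ck.simps(2)[of k] by blast

lemma Ck_cong: "Ck k U f \<Longrightarrow> open U \<Longrightarrow> (\<And>x. x \<in> U \<Longrightarrow> f x = g x) \<Longrightarrow> Ck k U g"
proof (induction k arbitrary: f g)
  case 0 then show ?case using continuous_on_cong[of U U f g] by simp
next
  case (Suc k)
  have fd: "f differentiable_on U" and fc: "continuous_on U f" using Ck_SucD[OF Suc.prems(1)] by simp_all
  have d: "g differentiable_on U"
  proof -
    have "g differentiable (at x)" if "x \<in> U" for x
    proof -
      have "f differentiable (at x)"
        using fd Suc.prems(2) that differentiable_on_eq_differentiable_at by blast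
      then show ?thesis using differentiable_cong_open[OF Suc.prems(2) that, of f g] Suc.prems(3) by blast
    qed
    then show ?thesis using differentiable_at_imp_differentiable_on by blast
  qed
  have c: "continuous_on U g" using fc Suc.prems(3) continuous_on_cong by blast
  have "Ck k U (\<lambda>x. pd g e x)" if "e \<in> Basis" for e
  proof -
    have "Ck k U (\<lambda>x. pd f e x)" using Ck_SucD[OF Suc.prems(1)] that by blast
    moreover have "\<And>x. x \<in> U \<Longrightarrow> pd f e x = pd g e x"
      using pd_cong_open[OF Suc.prems(2), of _ f g] Suc.prems(3) by blast
    ultimately show ?thesis using Suc.IH[OF _ Suc.prems(2)] by blast
  qed
  then show ?case using d c unfolding Ck.simps(2)[of k] by blast
qed

lemma Ck_SucI:
  assumes "open U" "\<And>x. x \<in> U \<Longrightarrow> f differentiable (at x)"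
    "\<And>e. e \<in> Basis \<Longrightarrow> Ck k U (\<lambda>x. pd f e x)"
  shows "Ck (Suc k) U f"
proof -
  have "f differentiable_on U" using assms differentiable_at_imp_differentiable_on by blast
  then show ?thesis using assms differentiable_imp_continuous_on by auto
qed

lemma Ck_const: "open U \<Longrightarrow> Ck k U (\<lambda>x. c)"
proof (induction k arbitrary: c)
  case 0 then show ?case by simp
next
  case (Suc k)
  show ?case
  proof (rule Ck_SucI[OF Suc.prems])
    fix e :: 'a
    have "(\<lambda>x. pd (\<lambda>x. c) e x) = (\<lambda>x. 0)" by simp
    then show "Ck k U (\<lambda>x. pd (\<lambda>x. c) e x)" using Suc.IH[OF Suc.prems] by simp
  qed simp
qed

lemma Ck_linear:
  fixes U :: "'a::euclidean_space set"
  assumes L: "bounded_linear L" and U: "open U"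
  shows "Ck k U f \<Longrightarrow> Ck k U (\<lambda>x. L (f x))"
proof (induction k arbitrary: f)
  case 0
  then have "continuous_on U f" by (simp only: Ck.simps(1))
  then have "continuous_on U (\<lambda>x. L (f x))" by (rule bounded_linear.continuous_on[OF L])
  then show ?case by (simp only: Ck.simps(1))
next
  case (Suc k)
  have dx: "f differentiable (at x)" if "x \<in> U" for x using Ck_diff_at[OF Suc.prems U that] .
  show ?case
  proof (rule Ck_SucI[OF U])
    fix x assume "x \<in> U"
    then show "(\<lambda>x. L (f x)) differentiable (at x)"
      using bounded_linear.has_derivative[OF L pd_has[OF dx]] unfolding differentiable_def by blast
  next
    fix e :: 'a assume e: "e \<in> Basis"
    have eq: "pd (\<lambda>x. L (f x)) e x = L (pd f e x)" if "x \<in> U" for x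
      by (rule pd_eq, rule bounded_linear.has_derivative[OF L pd_has[OF dx[OF that]]])
    have "Ck k U (\<lambda>x. pd f e x)" using Ck_SucD[OF Suc.prems] e by blast
    then have "Ck k U (\<lambda>x. L (pd f e x))" by (rule Suc.IH)
    then show "Ck k U (\<lambda>x. pd (\<lambda>x. L (f x)) e x)" using Ck_cong[OF _ U, of k "\<lambda>x. L (pd f e x)"] eq by simp
  qed
qed

lemma Ck_add:
  fixes U :: "'a::euclidean_space set"
  assumes U: "open U"
  shows "Ck k U f \<Longrightarrow> Ck k U g \<Longrightarrow> Ck k U (\<lambda>x. f x + g x)"
proof (induction k arbitrary: f g)
  case 0
  then have "continuous_on U f" "continuous_on U g" by (simp_all only: Ck.simps(1))
  then have "continuous_on U (\<lambda>x. f x + g x)" by (rule continuous_on_add)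
  then show ?case by (simp only: Ck.simps(1))
next
  case (Suc k)
  have df: "f differentiable (at x)" if "x \<in> U" for x using Ck_diff_at[OF Suc.prems(1) U that] .
  have dg: "g differentiable (at x)" if "x \<in> U" for x using Ck_diff_at[OF Suc.prems(2) U that] .
  show ?case
  proof (rule Ck_SucI[OF U])
    fix x assume "x \<in> U"
    then show "(\<lambda>x. f x + g x) differentiable (at x)" using differentiable_add[OF df dg] by blast
  next
    fix e :: 'a assume e: "e \<in> Basis"
    have eq: "pd (\<lambda>x. f x + g x) e x = pd f e x + pd g e x" if "x \<in> U" for x
      using pd_add df dg that by blast
    have "Ck k U (\<lambda>x. pd f e x)" "Ck k U (\<lambda>x. pd g e x)" using Ck_SucD[OF Suc.prems(1)] Ck_SucD[OF Suc.prems(2)] e by blast+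
    then have "Ck k U (\<lambda>x. pd f e x + pd g e x)" by (rule Suc.IH)
    then show "Ck k U (\<lambda>x. pd (\<lambda>x. f x + g x) e x)" using Ck_cong[OF _ U, of k "\<lambda>x. pd f e x + pd g e x"] eq by simp
  qed
qed

lemma Ck_bilinear:
  fixes U :: "'a::euclidean_space set"
  assumes B: "bounded_bilinear B" and U: "open U"
  shows "Ck k U f \<Longrightarrow> Ck k U g \<Longrightarrow> Ck k U (\<lambda>x. B (f x) (g x))"
proof (induction k arbitrary: f g)
  case 0
  then have "continuous_on U f" "continuous_on U g" by (simp_all only: Ck.simps(1))
  then have "continuous_on U (\<lambda>x. B (f x) (g x))" by (rule bounded_bilinear.continuous_on[OF B])
  then show ?case by (simp only: Ck.simps(1))
next
  case (Suc k)
  have df: "f differentiable (at x)" if "x \<in> U" for x using Ck_diff_at[OF Suc.prems(1) U that] .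
  have dg: "g differentiable (at x)" if "x \<in> U" for x using Ck_diff_at[OF Suc.prems(2) U that] .
  show ?case
  proof (rule Ck_SucI[OF U])
    fix x assume "x \<in> U"
    then show "(\<lambda>x. B (f x) (g x)) differentiable (at x)"
      using bounded_bilinear.FDERIV[OF B pd_has[OF df] pd_has[OF dg]] unfolding differentiable_def by blast
  next
    fix e :: 'a assume e: "e \<in> Basis"
    have eq: "pd (\<lambda>x. B (f x) (g x)) e x = B (f x) (pd g e x) + B (pd f e x) (g x)" if "x \<in> U" for x
      by (rule pd_eq, rule bounded_bilinear.FDERIV[OF B pd_has[OF df[OF that]] pd_has[OF dg[OF that]]])
    have a: "Ck k U (\<lambda>x. pd f e x)" "Ck k U (\<lambda>x. pd g e x)" using Ck_SucD[OF Suc.prems(1)] Ck_SucD[OF Suc.prems(2)] e by blast+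
    have b: "Ck k U f" "Ck k U g" using Ck_mono[OF Suc.prems(1)] Ck_mono[OF Suc.prems(2)] .
    have "Ck k U (\<lambda>x. B (f x) (pd g e x))" using Suc.IH[OF b(1) a(2)] .
    moreover have "Ck k U (\<lambda>x. B (pd f e x) (g x))" using Suc.IH[OF a(1) b(2)] .
    ultimately have "Ck k U (\<lambda>x. B (f x) (pd g e x) + B (pd f e x) (g x))"
      using Ck_add[OF U] by blast
    then show "Ck k U (\<lambda>x. pd (\<lambda>x. B (f x) (g x)) e x)"
      using Ck_cong[OF _ U, of k "\<lambda>x. B (f x) (pd g e x) + B (pd f e x) (g x)"] eq by simp
  qed
qed

lemma bounded_bilinear_cross': "bounded_bilinear (\<lambda>x y::real^3. x \<times> y)"
  by (rule bounded_bilinear_cross)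

lemma Ck_mult: fixes U :: "'a::euclidean_space set" shows
  "open U \<Longrightarrow> Ck k U f \<Longrightarrow> Ck k U g \<Longrightarrow> Ck k U (\<lambda>x. f x * g x :: real)"
  using Ck_bilinear[OF bounded_bilinear_mult] by blast

lemma Ck_scaleR: fixes U :: "'a::euclidean_space set" shows
  "open U \<Longrightarrow> Ck k U f \<Longrightarrow> Ck k U g \<Longrightarrow> Ck k U (\<lambda>x. f x *\<^sub>R g x)"
  using Ck_bilinear[OF bounded_bilinear_scaleR] by blast

lemma Ck_inner: fixes U :: "'a::euclidean_space set" shows
  "open U \<Longrightarrow> Ck k U f \<Longrightarrow> Ck k U g \<Longrightarrow> Ck k U (\<lambda>x. f x \<bullet> g x)"
  using Ck_bilinear[OF bounded_bilinear_inner] by blast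

lemma Ck_cross: fixes U :: "'a::euclidean_space set" shows
  "open U \<Longrightarrow> Ck k U f \<Longrightarrow> Ck k U g \<Longrightarrow> Ck k U (\<lambda>x. f x \<times> g x)"
  using Ck_bilinear[OF bounded_bilinear_cross] by blast

lemma Ck_minus: fixes U :: "'a::euclidean_space set" shows
  "open U \<Longrightarrow> Ck k U f \<Longrightarrow> Ck k U (\<lambda>x. - f x)"
  using Ck_linear[OF bounded_linear_minus[OF bounded_linear_ident]] by blast

lemma Ck_diff: fixes U :: "'a::euclidean_space set" shows
  "open U \<Longrightarrow> Ck k U f \<Longrightarrow> Ck k U g \<Longrightarrow> Ck k U (\<lambda>x. f x - g x)"
  using Ck_add[of U k f "\<lambda>x. - g x"] Ck_minus[of U k g] by simp

lemma Ck_nth: fixes U :: "'a::euclidean_space set" shows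
  "open U \<Longrightarrow> Ck k U f \<Longrightarrow> Ck k U (\<lambda>x. f x $ i)"
  using Ck_linear[OF bounded_linear_vec_nth] by blast

lemma Ck_sum: fixes U :: "'a::euclidean_space set" assumes U: "open U" shows
  "finite S \<Longrightarrow> (\<And>i. i \<in> S \<Longrightarrow> Ck k U (f i)) \<Longrightarrow> Ck k U (\<lambda>x. \<Sum>i\<in>S. f i x)"
proof (induction S rule: finite_induct)
  case empty then show ?case using Ck_const[OF U] by simp
next
  case (insert a S)
  have A: "Ck k U (\<lambda>x. f a x)" using insert.prems by simp
  have B: "Ck k U (\<lambda>x. \<Sum>i\<in>S. f i x)" using insert.IH insert.prems by simp
  have "Ck k U (\<lambda>x. f a x + (\<Sum>i\<in>S. f i x))"
    using Ck_add[OF U A B] .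
  then show ?case using insert.hyps by simp
qed

lemma Ck_vec3: fixes U :: "'a::euclidean_space set" shows
  "open U \<Longrightarrow> (\<And>i. Ck k U (\<lambda>x. F i x :: real)) \<Longrightarrow> Ck k U (\<lambda>x. \<chi> i::3. F i x)"
proof -
  assume U: "open U" and F: "\<And>i. Ck k U (\<lambda>x. F i x)"
  have "Ck k U (\<lambda>x. F i x *\<^sub>R (axis i 1 :: real^3))" for i
    using Ck_scaleR[OF U F Ck_const[OF U]] .
  then have "Ck k U (\<lambda>x. \<Sum>i\<in>UNIV. F i x *\<^sub>R (axis i 1 :: real^3))"
    using Ck_sum[OF U, where S=UNIV and f="\<lambda>i x. F i x *\<^sub>R (axis i 1 :: real^3)"] by simp
  moreover have "(\<Sum>i\<in>UNIV. F i x *\<^sub>R (axis i 1 :: real^3)) = (\<chi> i. F i x)" for x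
    by (simp add: vec_eq_iff axis_def if_distrib cong: if_cong)
  ultimately show ?thesis by simp
qed

lemma pd_expand:
  fixes F :: "'b::euclidean_space \<Rightarrow> 'c::real_normed_vector"
  assumes "F differentiable (at y)"
  shows "pd F v y = (\<Sum>b\<in>Basis. (v \<bullet> b) *\<^sub>R pd F b y)"
proof -
  have L: "linear (\<lambda>v. pd F v y)" using pd_linear[OF assms] .
  have "pd F v y = pd F (\<Sum>b\<in>Basis. (v \<bullet> b) *\<^sub>R b) y" by (simp add: euclidean_representation)
  also have "\<dots> = (\<Sum>b\<in>Basis. pd F ((v \<bullet> b) *\<^sub>R b) y)" using linear_sum[OF L] by simp
  also have "\<dots> = (\<Sum>b\<in>Basis. (v \<bullet> b) *\<^sub>R pd F b y)" using linear_scale[OF L] by simp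
  finally show ?thesis .
qed

lemma image_subsetI_aux: "g ` U \<subseteq> V \<Longrightarrow> x \<in> U \<Longrightarrow> g x \<in> V" by blast

lemma Ck_comp:
  fixes U :: "'a::euclidean_space set" and V :: "'b::euclidean_space set"
    and F :: "'b \<Rightarrow> 'c::real_normed_vector"
  assumes U: "open U" and V: "open V"
  shows "Ck k V F \<Longrightarrow> Ck k U g \<Longrightarrow> g ` U \<subseteq> V \<Longrightarrow> Ck k U (\<lambda>x. F (g x))"
proof (induction k arbitrary: F g)
  case 0
  then have "continuous_on V F" "continuous_on U g" by (simp_all only: Ck.simps(1))
  then have "continuous_on U (\<lambda>x. F (g x))" using continuous_on_compose2[of V F U g] 0(3) by simp
  then show ?case by (simp only: Ck.simps(1))
next
  case (Suc k)
  have dg: "g differentiable (at x)" if "x \<in> U" for x using Ck_diff_at[OF Suc.prems(2) U that] .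
  have dF: "F differentiable (at (g x))" if "x \<in> U" for x
  proof -
    have "g x \<in> V" using Suc.prems(3) that by (rule image_subsetI_aux)
    then show ?thesis using Ck_diff_at[OF Suc.prems(1) V] by simp
  qed
  show ?case
  proof (rule Ck_SucI[OF U])
    fix x assume "x \<in> U"
    then show "(\<lambda>x. F (g x)) differentiable (at x)"
      using has_derivative_compose[OF pd_has[OF dg] pd_has[OF dF]] unfolding differentiable_def by blast
  next
    fix e :: 'a assume e: "e \<in> Basis"
    have eq: "pd (\<lambda>x. F (g x)) e x = (\<Sum>b\<in>Basis. (pd g e x \<bullet> b) *\<^sub>R pd F b (g x))" if "x \<in> U" for x
      using pd_chain[OF dg[OF that] dF[OF that]] pd_expand[OF dF[OF that], of "pd g e x"] by (simp only:)
    have "Ck k U (\<lambda>x. (pd g e x \<bullet> b) *\<^sub>R pd F b (g x))" if b: "b \<in> Basis" for b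
    proof -
      have "Ck k U (\<lambda>x. pd g e x)" using Ck_SucD[OF Suc.prems(2)] e by blast
      then have A: "Ck k U (\<lambda>x. pd g e x \<bullet> b)" using Ck_inner[OF U _ Ck_const[OF U]] by blast
      have "Ck k V (\<lambda>y. pd F b y)" using Ck_SucD[OF Suc.prems(1)] b by blast
      then have B: "Ck k U (\<lambda>x. pd F b (g x))" using Suc.IH[OF _ Ck_mono[OF Suc.prems(2)] Suc.prems(3)] by simp
      show ?thesis using Ck_scaleR[OF U A B] .
    qed
    then have "Ck k U (\<lambda>x. \<Sum>b\<in>Basis. (pd g e x \<bullet> b) *\<^sub>R pd F b (g x))"
      using Ck_sum[OF U, where S=Basis and f="\<lambda>b x. (pd g e x \<bullet> b) *\<^sub>R pd F b (g x)"] by simp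
    then show "Ck k U (\<lambda>x. pd (\<lambda>x. F (g x)) e x)"
      using Ck_cong[OF _ U, of k "\<lambda>x. \<Sum>b\<in>Basis. (pd g e x \<bullet> b) *\<^sub>R pd F b (g x)"] eq by simp
  qed
qed

lemma Ck_inverse:
  fixes U :: "'a::euclidean_space set" and f :: "'a \<Rightarrow> real"
  assumes U: "open U" and nz: "\<And>x. x \<in> U \<Longrightarrow> f x \<noteq> 0"
  shows "Ck k U f \<Longrightarrow> Ck k U (\<lambda>x. inverse (f x))"
proof (induction k)
  case 0
  then have "continuous_on U f" by (simp only: Ck.simps(1))
  then have "continuous_on U (\<lambda>x. inverse (f x))" using nz by (intro continuous_on_inverse) auto
  then show ?case by (simp only: Ck.simps(1))
next
  case (Suc k)
  have df: "f differentiable (at x)" if "x \<in> U" for x using Ck_diff_at[OF Suc.prems U that] .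
  have hd: "((\<lambda>x. inverse (f x)) has_derivative (\<lambda>h. - (inverse (f x) * pd f h x * inverse (f x)))) (at x)"
    if "x \<in> U" for x
    using Deriv.has_derivative_inverse[OF nz[OF that] pd_has[OF df[OF that]]] .
  show ?case
  proof (rule Ck_SucI[OF U])
    fix x assume "x \<in> U"
    then show "(\<lambda>x. inverse (f x)) differentiable (at x)" using hd unfolding differentiable_def by blast
  next
    fix e :: 'a assume e: "e \<in> Basis"
    have eq: "pd (\<lambda>x. inverse (f x)) e x = - (inverse (f x) * pd f e x * inverse (f x))" if "x \<in> U" for x
      using pd_eq[OF hd[OF that]] .
    have I: "Ck k U (\<lambda>x. inverse (f x))" using Suc.IH[OF Ck_mono[OF Suc.prems]] .
    have P: "Ck k U (\<lambda>x. pd f e x)" using Ck_SucD[OF Suc.prems] e by blast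
    have "Ck k U (\<lambda>x. - (inverse (f x) * pd f e x * inverse (f x)))"
      using Ck_minus[OF U Ck_mult[OF U Ck_mult[OF U I P] I]] .
    then show "Ck k U (\<lambda>x. pd (\<lambda>x. inverse (f x)) e x)"
      using Ck_cong[OF _ U, of k "\<lambda>x. - (inverse (f x) * pd f e x * inverse (f x))"] eq by simp
  qed
qed

lemma Ck_norm:
  fixes U :: "'a::euclidean_space set" and f :: "'a \<Rightarrow> 'b::euclidean_space"
  assumes U: "open U" and nz: "\<And>x. x \<in> U \<Longrightarrow> f x \<noteq> 0"
  shows "Ck k U f \<Longrightarrow> Ck k U (\<lambda>x. norm (f x))"
proof (induction k)
  case 0
  then have "continuous_on U f" by (simp only: Ck.simps(1))
  then have "continuous_on U (\<lambda>x. norm (f x))" by (intro continuous_on_norm)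
  then show ?case by (simp only: Ck.simps(1))
next
  case (Suc k)
  have df: "f differentiable (at x)" if "x \<in> U" for x using Ck_diff_at[OF Suc.prems U that] .
  have dn: "norm differentiable (at (f x))" if "x \<in> U" for x using differentiable_norm_at[OF nz[OF that]] .
  show ?case
  proof (rule Ck_SucI[OF U])
    fix x assume "x \<in> U"
    then show "(\<lambda>x. norm (f x)) differentiable (at x)"
      using has_derivative_compose[OF pd_has[OF df] pd_has[OF dn]] unfolding differentiable_def by blast
  next
    fix e :: 'a assume e: "e \<in> Basis"
    have eq: "pd (\<lambda>x. norm (f x)) e x = (pd f e x \<bullet> f x) * inverse (norm (f x))" if "x \<in> U" for x
      using pd_chain[OF df[OF that] dn[OF that]] pd_norm[OF nz[OF that]] by (simp add: divide_inverse)
    have N: "Ck k U (\<lambda>x. norm (f x))" using Suc.IH[OF Ck_mono[OF Suc.prems]] .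
    have I: "Ck k U (\<lambda>x. inverse (norm (f x)))" using Ck_inverse[OF U _ N] nz by simp
    have P: "Ck k U (\<lambda>x. pd f e x)" using Ck_SucD[OF Suc.prems] e by blast
    have "Ck k U (\<lambda>x. (pd f e x \<bullet> f x) * inverse (norm (f x)))"
      using Ck_mult[OF U Ck_inner[OF U P Ck_mono[OF Suc.prems]] I] .
    then show "Ck k U (\<lambda>x. pd (\<lambda>x. norm (f x)) e x)"
      using Ck_cong[OF _ U, of k "\<lambda>x. (pd f e x \<bullet> f x) * inverse (norm (f x))"] eq by simp
  qed
qed

lemma matrix_inv_eq:
  fixes A :: "real^'n^'n"
  assumes "A ** B = mat 1" "B ** A = mat 1"
  shows "matrix_inv A = B"
proof -
  have "\<exists>A'. A ** A' = mat 1 \<and> A' ** A = mat 1" using assms by blast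
  then have s: "A ** matrix_inv A = mat 1 \<and> matrix_inv A ** A = mat 1"
    unfolding matrix_inv_def by (rule someI_ex)
  have "matrix_inv A = matrix_inv A ** (A ** B)" using assms by simp
  also have "\<dots> = (matrix_inv A ** A) ** B" by (simp add: matrix_mul_assoc)
  also have "\<dots> = B" using s by simp
  finally show ?thesis .
qed

lemma inv2:
  fixes A :: "real^2^2"
  assumes d: "A$1$1 * A$2$2 - A$1$2 * A$2$1 \<noteq> 0"
  defines "D \<equiv> A$1$1 * A$2$2 - A$1$2 * A$2$1"
  shows "matrix_inv A = (\<chi> i j. if i = 1 \<and> j = 1 then A$2$2 / D else if i = 2 \<and> j = 2 then A$1$1 / D
                                 else if i = 1 then - A$1$2 / D else - A$2$1 / D)"
proof (rule matrix_inv_eq)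
  have D: "D \<noteq> 0" using d unfolding D_def .
  show "A ** (\<chi> i j. if i = 1 \<and> j = 1 then A$2$2 / D else if i = 2 \<and> j = 2 then A$1$1 / D
                                 else if i = 1 then - A$1$2 / D else - A$2$1 / D) = mat 1"
  proof -
    have sq: "(A$1$1 * A$2$2 - A$1$2 * A$2$1) * (A$1$1 * A$2$2 - A$1$2 * A$2$1) \<noteq> 0" using D unfolding D_def by simp
    show ?thesis
      using D sq unfolding D_def
      by (simp add: vec_eq_iff forall_2 matrix_matrix_mult_def sum_2 mat_def field_simps)
  qed
  show "(\<chi> i j. if i = 1 \<and> j = 1 then A$2$2 / D else if i = 2 \<and> j = 2 then A$1$1 / D
                                 else if i = 1 then - A$1$2 / D else - A$2$1 / D) ** A = mat 1"
  proof -
    have sq: "(A$1$1 * A$2$2 - A$1$2 * A$2$1) * (A$1$1 * A$2$2 - A$1$2 * A$2$1) \<noteq> 0" using D unfolding D_def by simp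
    show ?thesis
      using D sq unfolding D_def
      by (simp add: vec_eq_iff forall_2 matrix_matrix_mult_def sum_2 mat_def field_simps)
  qed
qed

lemma bac_cab: "((a::real^3) \<times> b) \<times> c = (a \<bullet> c) *\<^sub>R b - (b \<bullet> c) *\<^sub>R a"
  by (simp add: cross3_simps forall_3)

lemma triple_cyc: "((a::real^3) \<times> b) \<bullet> c = a \<bullet> (b \<times> c)"
  by (simp add: cross3_simps)

lemma decomp3:
  fixes a b v :: "real^3"
  shows "((a \<bullet> a) * (b \<bullet> b) - (a \<bullet> b) * (a \<bullet> b)) *\<^sub>R v =
    (v \<bullet> ((b \<bullet> b) *\<^sub>R a - (a \<bullet> b) *\<^sub>R b)) *\<^sub>R a + (v \<bullet> ((a \<bullet> a) *\<^sub>R b - (a \<bullet> b) *\<^sub>R a)) *\<^sub>R b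
     + (v \<bullet> (a \<times> b)) *\<^sub>R (a \<times> b)"
  unfolding vec_eq_iff
proof
  fix i :: 3
  show "(((a \<bullet> a) * (b \<bullet> b) - (a \<bullet> b) * (a \<bullet> b)) *\<^sub>R v) $ i =
    ((v \<bullet> ((b \<bullet> b) *\<^sub>R a - (a \<bullet> b) *\<^sub>R b)) *\<^sub>R a + (v \<bullet> ((a \<bullet> a) *\<^sub>R b - (a \<bullet> b) *\<^sub>R a)) *\<^sub>R b
     + (v \<bullet> (a \<times> b)) *\<^sub>R (a \<times> b)) $ i"
    using exhaust_3[of i]
    by (auto simp: inner_vec_def sum_3 cross3_def vector_def) (simp_all add: algebra_simps)
qed

lemma normsq_cross: "((a::real^3) \<times> b) \<bullet> (a \<times> b) = (a \<bullet> a) * (b \<bullet> b) - (a \<bullet> b) * (a \<bullet> b)"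
  by (simp add: cross3_simps)

lemma tangent_repr:
  fixes a b x :: "real^3"
  defines "D \<equiv> (a \<bullet> a) * (b \<bullet> b) - (a \<bullet> b) * (a \<bullet> b)"
  defines "R1 \<equiv> (b \<bullet> b) *\<^sub>R a - (a \<bullet> b) *\<^sub>R b"
  defines "R2 \<equiv> (a \<bullet> a) *\<^sub>R b - (a \<bullet> b) *\<^sub>R a"
  assumes t: "x \<bullet> (a \<times> b) = 0" and D: "D \<noteq> 0"
  shows "x = ((x \<bullet> R1) / D) *\<^sub>R a + ((x \<bullet> R2) / D) *\<^sub>R b"
proof -
  have "D *\<^sub>R x = (x \<bullet> R1) *\<^sub>R a + (x \<bullet> R2) *\<^sub>R b"
    using decomp3[of a b x] t unfolding D_def R1_def R2_def by simp
  then have "(1/D) *\<^sub>R (D *\<^sub>R x) = (1/D) *\<^sub>R ((x \<bullet> R1) *\<^sub>R a + (x \<bullet> R2) *\<^sub>R b)" by simp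
  then show ?thesis using D by (simp add: scaleR_add_right)
qed

lemma cross_comb_trace:
  fixes a b :: "real^3"
  shows "(\<alpha> *\<^sub>R a + \<beta> *\<^sub>R b) \<times> b + a \<times> (\<gamma> *\<^sub>R a + \<delta> *\<^sub>R b) = (\<alpha> + \<delta>) *\<^sub>R (a \<times> b)"
  by (simp add: cross_add_left cross_add_right cross_mult_left cross_mult_right scaleR_add_left)

lemma cross_comb_det:
  fixes a b :: "real^3"
  shows "(\<alpha> *\<^sub>R a + \<beta> *\<^sub>R b) \<times> (\<gamma> *\<^sub>R a + \<delta> *\<^sub>R b) = (\<alpha> * \<delta> - \<beta> * \<gamma>) *\<^sub>R (a \<times> b)"
proof -
  have "b \<times> a = - (a \<times> b)" using cross_skew by blast
  then show ?thesis
    by (simp add: cross_add_left cross_add_right cross_mult_left cross_mult_right scaleR_diff_left mult.commute)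
qed

lemma Ck_id: fixes V :: "'a::euclidean_space set" shows "open V \<Longrightarrow> Ck k V (\<lambda>x. x)"
proof (induction k)
  case 0 then show ?case by (simp add: continuous_on_id)
next
  case (Suc k)
  show ?case
  proof (rule Ck_SucI[OF Suc.prems])
    fix e :: 'a
    have "(\<lambda>x. pd (\<lambda>x. x) e x) = (\<lambda>x. e)" by (rule ext, rule pd_eq, rule has_derivative_ident)
    then show "Ck k V (\<lambda>x. pd (\<lambda>x. x) e x)" using Ck_const[OF Suc.prems] by simp
  qed simp
qed

lemma axis_basis2[simp]: "axis (i::2) (1::real) \<in> Basis" by simp
lemma axis_basis3[simp]: "axis (i::3) (1::real) \<in> Basis" by simp

lemma open_nz: "open (- {0::real^3})" by (simp add: open_Compl)

locale surf =
  fixes X :: "real^2 \<Rightarrow> real^3" and U :: "(real^2) set" and gam :: "real^3 \<Rightarrow> real"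
  assumes U_open: "open U" and X_smooth: "smooth_on U X"
    and immersion: "\<forall>p\<in>U. Xd X 1 p \<times> Xd X 2 p \<noteq> 0"
    and gam_C3: "Ck 3 (- {0}) (gam0 gam)"
begin

lemma XCk: "Ck k U X" using X_smooth unfolding smooth_on_def by blast

lemma Xd_eq: "Xd X i = (\<lambda>p. pd X (axis i 1) p)" by (rule ext) (simp add: Xd_def)

lemma XdCk: "Ck k U (Xd X i)"
  using Ck_pd[OF XCk[of "Suc k"] axis_basis2[of i]] Xd_eq by simp

lemma X2Ck: "Ck k U (\<lambda>p. pd (Xd X i) (axis j 1) p)"
  using Ck_pd[OF XdCk[of "Suc k" i] axis_basis2[of j]] .

definition nn :: "real^2 \<Rightarrow> real^3" where "nn p = Xd X 1 p \<times> Xd X 2 p"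

lemma nnCk: "Ck k U nn"
  using Ck_cross[OF U_open XdCk XdCk] unfolding nn_def[abs_def] .

lemma nn_nz: "p \<in> U \<Longrightarrow> nn p \<noteq> 0" using immersion unfolding nn_def by blast

lemma nu_eq: "nu X = (\<lambda>p. inverse (norm (nn p)) *\<^sub>R nn p)"
  by (rule ext) (simp add: nu_def nn_def divide_inverse)

lemma nuCk: "Ck k U (nu X)"
proof -
  have "Ck k U (\<lambda>p. norm (nn p))" using Ck_norm[OF U_open nn_nz nnCk] .
  then have "Ck k U (\<lambda>p. inverse (norm (nn p)))" using Ck_inverse[OF U_open] nn_nz by simp
  then show ?thesis using Ck_scaleR[OF U_open _ nnCk] nu_eq by simp
qed

lemma norm_nu: "p \<in> U \<Longrightarrow> norm (nu X p) = 1"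
  using nn_nz[of p] by (simp add: nu_eq)

lemma nu_nz: "p \<in> U \<Longrightarrow> nu X p \<noteq> 0"
  using norm_nu by fastforce

lemma gamt_eq: "gamt gam = (\<lambda>x. norm x * gam0 gam x)"
  by (rule ext) (simp add: gamt_def gam0_def)

lemma gamtCk: "Ck 3 (- {0}) (gamt gam)"
proof -
  have "Ck 3 (- {0::real^3}) (\<lambda>x. norm x)"
    using Ck_norm[OF open_nz _ Ck_id[OF open_nz]] by simp
  then show ?thesis using Ck_mult[OF open_nz _ gam_C3] gamt_eq by simp
qed

lemma grad3_eq: "grad3 f = (\<lambda>x. \<chi> k. pd f (axis k 1) x)"
  by (rule ext) (simp add: grad3_def)

lemma gradCk: "Ck 2 (- {0}) (grad3 (gamt gam))"
proof -
  have "Ck 2 (- {0}) (\<lambda>x. pd (gamt gam) (axis k 1) x)" for k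
    using Ck_pd[OF gamtCk[unfolded numeral_3_eq_3] axis_basis3[of k]] by (simp add: numeral_2_eq_2)
  then show ?thesis using Ck_vec3[OF open_nz] grad3_eq by simp
qed

lemma xi_eq: "xi gam X = (\<lambda>p. grad3 (gamt gam) (nu X p))"
  by (rule ext) (simp add: xi_def)

lemma xiCk: "Ck 2 U (xi gam X)"
proof -
  have "nu X ` U \<subseteq> - {0}" using nu_nz by auto
  then show ?thesis using Ck_comp[OF U_open open_nz gradCk nuCk] xi_eq by simp
qed

end

context surf begin

lemma dX: "p \<in> U \<Longrightarrow> X differentiable (at p)"
  using Ck_diff_at[OF XCk[of "Suc 0"] U_open] .
lemma dXd: "p \<in> U \<Longrightarrow> Xd X i differentiable (at p)"
  using Ck_diff_at[OF XdCk[of "Suc 0"] U_open] .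
lemma dX2: "p \<in> U \<Longrightarrow> (\<lambda>q. pd (Xd X i) (axis j 1) q) differentiable (at p)"
  using Ck_diff_at[OF X2Ck[of "Suc 0"] U_open] .
lemma dnn: "p \<in> U \<Longrightarrow> nn differentiable (at p)"
  using Ck_diff_at[OF nnCk[of "Suc 0"] U_open] .
lemma dnu: "p \<in> U \<Longrightarrow> nu X differentiable (at p)"
  using Ck_diff_at[OF nuCk[of "Suc 0"] U_open] .
lemma dxi: "p \<in> U \<Longrightarrow> xi gam X differentiable (at p)"
  using Ck_diff_at[OF xiCk[unfolded numeral_2_eq_2] U_open] .
lemma dxi1: "p \<in> U \<Longrightarrow> (\<lambda>q. pd (xi gam X) (axis i 1) q) differentiable (at p)"
proof -
  have "Ck (Suc 0) U (\<lambda>q. pd (xi gam X) (axis i 1) q)"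
    using Ck_pd[OF xiCk[unfolded numeral_2_eq_2] axis_basis2[of i]] .
  then show "p \<in> U \<Longrightarrow> ?thesis" using Ck_diff_at[OF _ U_open] by blast
qed

lemma pdX: "pd X (axis i 1) p = Xd X i p" by (simp add: Xd_def)

lemma X_sym: "p \<in> U \<Longrightarrow> pd (Xd X 1) (axis 2 1) p = pd (Xd X 2) (axis 1 1) p"
  using young_vec[OF U_open _ dX, of p "axis 1 1" "axis 2 1"] dXd[of p 1] dXd[of p 2]
  unfolding Xd_eq by blast

lemma xi_sym: "p \<in> U \<Longrightarrow> pd (\<lambda>q. pd (xi gam X) (axis 1 1) q) (axis 2 1) p
                          = pd (\<lambda>q. pd (xi gam X) (axis 2 1) q) (axis 1 1) p"
  using young_vec[OF U_open _ dxi, of p "axis 1 1" "axis 2 1"] dxi1[of p 1] dxi1[of p 2] by blast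

definition g :: "2 \<Rightarrow> 2 \<Rightarrow> real^2 \<Rightarrow> real" where "g i j p = Xd X i p \<bullet> Xd X j p"
definition DD :: "real^2 \<Rightarrow> real" where "DD p = g 1 1 p * g 2 2 p - g 1 2 p * g 1 2 p"
definition R1 :: "real^2 \<Rightarrow> real^3" where "R1 p = g 2 2 p *\<^sub>R Xd X 1 p - g 1 2 p *\<^sub>R Xd X 2 p"
definition R2 :: "real^2 \<Rightarrow> real^3" where "R2 p = g 1 1 p *\<^sub>R Xd X 2 p - g 1 2 p *\<^sub>R Xd X 1 p"

lemma DD_nn: "DD p = nn p \<bullet> nn p"
  unfolding DD_def g_def nn_def by (simp add: normsq_cross)

lemma DD_nz: "p \<in> U \<Longrightarrow> DD p \<noteq> 0"
  using nn_nz DD_nn by simp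

lemma DD_pos: "p \<in> U \<Longrightarrow> DD p > 0"
  using nn_nz DD_nn by simp

lemma ginv_eq: assumes "p \<in> U"
  shows "ginv X p = (\<chi> i j. if i = 1 \<and> j = 1 then g 2 2 p / DD p else if i = 2 \<and> j = 2 then g 1 1 p / DD p
                                 else - g 1 2 p / DD p)"
proof -
  have e: "gmat X p $ a $ b = g a b p" for a b by (simp add: gmat_def g_def)
  have g21: "g 2 1 p = g 1 2 p" by (simp add: g_def inner_commute)
  have "gmat X p $ 1 $ 1 * gmat X p $ 2 $ 2 - gmat X p $ 1 $ 2 * gmat X p $ 2 $ 1 = DD p"
    unfolding e DD_def g21 by simp
  then show ?thesis unfolding ginv_def using inv2[of "gmat X p"] DD_nz[OF assms] e g21
    by (simp cong: if_cong)
qed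

lemma ginv_contract1: "p \<in> U \<Longrightarrow> (\<Sum>j\<in>UNIV. ginv X p $ 1 $ j * (w \<bullet> Xd X j p)) = (w \<bullet> R1 p) / DD p"
  by (simp add: ginv_eq sum_2 R1_def inner_diff_right field_simps DD_nz)

lemma ginv_contract2: "p \<in> U \<Longrightarrow> (\<Sum>j\<in>UNIV. ginv X p $ 2 $ j * (w \<bullet> Xd X j p)) = (w \<bullet> R2 p) / DD p"
  by (simp add: ginv_eq sum_2 R2_def inner_diff_right field_simps DD_nz)

lemma sdiv_eq: "p \<in> U \<Longrightarrow>
  sdiv X V p = (pd V (axis 1 1) p \<bullet> R1 p + pd V (axis 2 1) p \<bullet> R2 p) / DD p"
  unfolding sdiv_def using ginv_contract1 ginv_contract2 by (simp add: sum_2 add_divide_distrib)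

lemma dxi_eq: "p \<in> U \<Longrightarrow>
  dxi_apply gam X p w = ((w \<bullet> R1 p) / DD p) *\<^sub>R pd (xi gam X) (axis 1 1) p
                      + ((w \<bullet> R2 p) / DD p) *\<^sub>R pd (xi gam X) (axis 2 1) p"
  unfolding dxi_apply_def using ginv_contract1 ginv_contract2 by (simp add: sum_2)

end

context surf begin

lemma nn_fun: "nn = (\<lambda>q. Xd X 1 q \<times> Xd X 2 q)" by (rule ext) (simp add: nn_def)

lemma R1_cross: "Xd X 2 p \<times> nn p = R1 p"
proof -
  have "Xd X 2 p \<times> nn p = - (nn p \<times> Xd X 2 p)" using cross_skew by blast
  also have "\<dots> = R1 p" unfolding nn_def R1_def g_def bac_cab by (simp add: inner_commute)
  finally show ?thesis .
qed

lemma R2_cross: "nn p \<times> Xd X 1 p = R2 p"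
  unfolding nn_def R2_def g_def bac_cab by (simp add: inner_commute)

lemma orth: "Xd X 1 p \<bullet> R1 p = DD p" "Xd X 2 p \<bullet> R1 p = 0" "Xd X 1 p \<bullet> R2 p = 0" "Xd X 2 p \<bullet> R2 p = DD p"
  unfolding R1_def R2_def DD_def g_def by (simp_all add: inner_diff_right inner_commute algebra_simps)

lemma pd_nn: "p \<in> U \<Longrightarrow> pd nn v p = Xd X 1 p \<times> pd (Xd X 2) v p + pd (Xd X 1) v p \<times> Xd X 2 p"
  unfolding nn_fun using pd_cross[OF dXd dXd] by blast

lemma pd_m: assumes p: "p \<in> U"
  shows "pd (\<lambda>q. norm (nn q)) (axis k 1) p
    = (pd (Xd X 1) (axis k 1) p \<bullet> R1 p + pd (Xd X 2) (axis k 1) p \<bullet> R2 p) / norm (nn p)"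
proof -
  have "pd (\<lambda>q. norm (nn q)) (axis k 1) p = pd norm (pd nn (axis k 1) p) (nn p)"
    using pd_chain[OF dnn[OF p] differentiable_norm_at[OF nn_nz[OF p]]] .
  also have "\<dots> = (pd nn (axis k 1) p \<bullet> nn p) / norm (nn p)" using pd_norm[OF nn_nz[OF p]] .
  also have "pd nn (axis k 1) p \<bullet> nn p = pd (Xd X 1) (axis k 1) p \<bullet> R1 p + pd (Xd X 2) (axis k 1) p \<bullet> R2 p"
  proof -
    have "(Xd X 1 p \<times> pd (Xd X 2) (axis k 1) p) \<bullet> nn p = pd (Xd X 2) (axis k 1) p \<bullet> (nn p \<times> Xd X 1 p)"
      by (metis triple_cyc inner_commute)
    moreover have "(pd (Xd X 1) (axis k 1) p \<times> Xd X 2 p) \<bullet> nn p = pd (Xd X 1) (axis k 1) p \<bullet> (Xd X 2 p \<times> nn p)"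
      by (rule triple_cyc)
    ultimately show ?thesis using pd_nn[OF p] R1_cross R2_cross by (simp add: inner_add_left)
  qed
  finally show ?thesis .
qed

lemma dm: "p \<in> U \<Longrightarrow> (\<lambda>q. norm (nn q)) differentiable (at p)"
  using differentiable_chain_at[OF dnn differentiable_norm_at[OF nn_nz]] by (simp add: o_def)

lemma hd_quot:
  assumes p: "p \<in> U" and f: "f differentiable (at p)"
  shows "((\<lambda>q. f q / norm (nn q)) has_derivative
     (\<lambda>h. (f p * - (inverse (norm (nn p)) * pd (\<lambda>q. norm (nn q)) h p * inverse (norm (nn p)))
          + pd f h p * inverse (norm (nn p))))) (at p)"
proof -
  have mnz: "norm (nn p) \<noteq> 0" using nn_nz[OF p] by simp
  show ?thesis
    using has_derivative_mult[OF pd_has[OF f] Deriv.has_derivative_inverse[OF mnz pd_has[OF dm[OF p]]]]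
    by (simp add: divide_inverse)
qed

lemma dquot: "p \<in> U \<Longrightarrow> f differentiable (at p) \<Longrightarrow> (\<lambda>q. f q / norm (nn q)) differentiable (at p)"
  using hd_quot unfolding differentiable_def by blast

lemma pd_quot:
  assumes p: "p \<in> U" and f: "f differentiable (at p)"
  shows "pd (\<lambda>q. f q / norm (nn q)) (axis k 1) p
     = pd f (axis k 1) p / norm (nn p)
       - f p * (pd (Xd X 1) (axis k 1) p \<bullet> R1 p + pd (Xd X 2) (axis k 1) p \<bullet> R2 p) / (norm (nn p))^3"
proof -
  define m where "m = norm (nn p)"
  define S where "S = pd (Xd X 1) (axis k 1) p \<bullet> R1 p + pd (Xd X 2) (axis k 1) p \<bullet> R2 p"
  have mnz: "m \<noteq> 0" using nn_nz[OF p] unfolding m_def by simp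
  have "pd (\<lambda>q. f q / norm (nn q)) (axis k 1) p
     = f p * - (inverse m * (S / m) * inverse m) + pd f (axis k 1) p * inverse m"
    using pd_eq[OF hd_quot[OF p f]] pd_m[OF p, of k] unfolding m_def S_def by simp
  also have "\<dots> = pd f (axis k 1) p / m - f p * S / m^3"
    using mnz by (simp add: field_simps power3_eq_cube)
  finally show ?thesis unfolding m_def S_def .
qed

end

context surf begin

lemma DD_m2: "DD p = (norm (nn p))^2"
  by (simp add: DD_nn power2_norm_eq_inner)

lemma div_rot:
  assumes p: "p \<in> U" and f: "f differentiable (at p)" and h: "h differentiable (at p)"
  shows "sdiv X (\<lambda>q. (f q / norm (nn q)) *\<^sub>R Xd X 1 q - (h q / norm (nn q)) *\<^sub>R Xd X 2 q) p
       = (pd f (axis 1 1) p - pd h (axis 2 1) p) / norm (nn p)"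
proof -
  define a where "a = (\<lambda>q. f q / norm (nn q))"
  define b where "b = (\<lambda>q. h q / norm (nn q))"
  have da: "a differentiable (at p)" unfolding a_def using dquot[OF p f] .
  have db: "b differentiable (at p)" unfolding b_def using dquot[OF p h] .
  have pV: "pd (\<lambda>q. a q *\<^sub>R Xd X 1 q - b q *\<^sub>R Xd X 2 q) v p
      = (a p *\<^sub>R pd (Xd X 1) v p + pd a v p *\<^sub>R Xd X 1 p) - (b p *\<^sub>R pd (Xd X 2) v p + pd b v p *\<^sub>R Xd X 2 p)" for v
  proof -
    have d1: "(\<lambda>q. a q *\<^sub>R Xd X 1 q) differentiable (at p)" using da dXd[OF p] by simp
    have d2: "(\<lambda>q. b q *\<^sub>R Xd X 2 q) differentiable (at p)" using db dXd[OF p] by simp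
    show ?thesis using pd_diff[OF d1 d2] pd_scaleR[OF da dXd[OF p]] pd_scaleR[OF db dXd[OF p]] by simp
  qed
  define m where "m = norm (nn p)"
  have mpos: "m > 0" unfolding m_def using nn_nz[OF p] by simp
  define X11 where "X11 = pd (Xd X 1) (axis 1 1) p"
  define X12 where "X12 = pd (Xd X 1) (axis 2 1) p"
  define X21 where "X21 = pd (Xd X 2) (axis 1 1) p"
  define X22 where "X22 = pd (Xd X 2) (axis 2 1) p"
  have sym: "X12 = X21" unfolding X12_def X21_def using X_sym[OF p] .
  have pa1: "pd a (axis 1 1) p = pd f (axis 1 1) p / m - f p * (X11 \<bullet> R1 p + X21 \<bullet> R2 p) / m^3"
    unfolding a_def m_def X11_def X21_def using pd_quot[OF p f] .
  have pb2: "pd b (axis 2 1) p = pd h (axis 2 1) p / m - h p * (X12 \<bullet> R1 p + X22 \<bullet> R2 p) / m^3"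
    unfolding b_def m_def X12_def X22_def using pd_quot[OF p h] .
  have ap: "a p = f p / m" and bp: "b p = h p / m" unfolding a_def b_def m_def by simp_all
  have DDm: "DD p = m^2" unfolding m_def using DD_m2 .
  have "sdiv X (\<lambda>q. a q *\<^sub>R Xd X 1 q - b q *\<^sub>R Xd X 2 q) p
    = ((a p * (X11 \<bullet> R1 p) + pd a (axis 1 1) p * DD p - b p * (X21 \<bullet> R1 p))
       + (a p * (X12 \<bullet> R2 p) - b p * (X22 \<bullet> R2 p) - pd b (axis 2 1) p * DD p)) / DD p"
    unfolding sdiv_eq[OF p] pV X11_def X12_def X21_def X22_def
    by (simp add: inner_add_left inner_diff_left orth)
  also have "\<dots> = (pd f (axis 1 1) p - pd h (axis 2 1) p) / m"
    unfolding pa1 pb2 ap bp DDm sym using mpos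
    by (simp add: field_simps power3_eq_cube power2_eq_square)
  finally show ?thesis unfolding a_def b_def m_def .
qed

end

lemma vec3_axis_sum: "(v::real^3) = (\<Sum>k\<in>UNIV. v$k *\<^sub>R axis k 1)"
  by (simp add: vec_eq_iff sum_3 axis_def forall_3)

lemma pd_expand3:
  fixes F :: "real^3 \<Rightarrow> 'c::real_normed_vector"
  assumes "F differentiable (at y)"
  shows "pd F v y = (\<Sum>k\<in>UNIV. v$k *\<^sub>R pd F (axis k 1) y)"
proof -
  have L: "linear (\<lambda>v. pd F v y)" using pd_linear[OF assms] .
  have "pd F v y = pd F (\<Sum>k\<in>UNIV. v$k *\<^sub>R axis k 1) y" using vec3_axis_sum[of v] by simp
  also have "\<dots> = (\<Sum>k\<in>UNIV. pd F (v$k *\<^sub>R axis k 1) y)" using linear_sum[OF L] by simp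
  also have "\<dots> = (\<Sum>k\<in>UNIV. v$k *\<^sub>R pd F (axis k 1) y)" using linear_scale[OF L] by simp
  finally show ?thesis .
qed

lemma grad3_inner:
  assumes "F differentiable (at y)"
  shows "grad3 F y \<bullet> v = pd F v y"
  using pd_expand3[OF assms, of v] by (simp add: grad3_def inner_vec_def mult.commute)

context surf begin

lemma dg0: "y \<noteq> 0 \<Longrightarrow> gam0 gam differentiable (at y)"
  using Ck_diff_at[OF gam_C3[unfolded numeral_3_eq_3] open_nz] by simp

lemma dgamt: "y \<noteq> 0 \<Longrightarrow> gamt gam differentiable (at y)"
  using Ck_diff_at[OF gamtCk[unfolded numeral_3_eq_3] open_nz] by simp

lemma gam0_hom: "c > 0 \<Longrightarrow> y \<noteq> 0 \<Longrightarrow> gam0 gam (c *\<^sub>R y) = gam0 gam y"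
  by (simp add: gam0_def)

lemma pd_g0_radial: assumes y: "y \<noteq> 0" shows "pd (gam0 gam) y y = 0"
proof -
  let ?g = "gam0 gam"
  have l: "((\<lambda>t::real. y + t *\<^sub>R y) has_derivative (\<lambda>s. s *\<^sub>R y)) (at 0)"
    by (auto intro!: derivative_eq_intros)
  have A: "((\<lambda>t. ?g (y + t *\<^sub>R y)) has_derivative (\<lambda>s. pd ?g (s *\<^sub>R y) y)) (at 0)"
    using has_derivative_compose[OF l, of ?g] pd_has[OF dg0[OF y]] by simp
  have eq: "?g y = ?g (y + t *\<^sub>R y)" if "t \<in> ball 0 1" for t
  proof -
    have "1 + t > 0" using that by (simp add: abs_less_iff)
    then have "?g ((1 + t) *\<^sub>R y) = ?g y" using gam0_hom y by blast
    then show ?thesis by (simp add: algebra_simps)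
  qed
  have B: "((\<lambda>t. ?g y) has_derivative (\<lambda>s. pd ?g (s *\<^sub>R y) y)) (at 0)"
  proof (rule has_derivative_transform_within_open[OF A open_ball[of 0 1]])
    show "(0::real) \<in> ball 0 1" by simp
    show "\<And>x. x \<in> ball 0 1 \<Longrightarrow> ?g (y + x *\<^sub>R y) = ?g y" using eq by simp
  qed
  have C: "((\<lambda>t::real. ?g y) has_derivative (\<lambda>s. 0)) (at 0)" by (rule has_derivative_const)
  have "(\<lambda>s. pd ?g (s *\<^sub>R y) y) = (\<lambda>s. 0)" using has_derivative_unique[OF B C] .
  then have "pd ?g (1 *\<^sub>R y) y = 0" by metis
  then show ?thesis by simp
qed

lemma pd_gamt: assumes y: "y \<noteq> 0"
  shows "pd (gamt gam) v y = (v \<bullet> y) / norm y * gam0 gam y + norm y * pd (gam0 gam) v y"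
proof -
  have "pd (gamt gam) v y = pd (\<lambda>x. norm x * gam0 gam x) v y" by (simp add: gamt_eq)
  also have "\<dots> = norm y * pd (gam0 gam) v y + pd norm v y * gam0 gam y"
    using pd_mult[OF differentiable_norm_at[OF y] dg0[OF y]] by simp
  finally show ?thesis using pd_norm[OF y] by simp
qed

lemma gam0_unit: "norm y = 1 \<Longrightarrow> gam0 gam y = gam y" by (simp add: gam0_def)
lemma gamt_unit: "norm y = 1 \<Longrightarrow> gamt gam y = gam y" by (simp add: gamt_def)

lemma euler: assumes y: "norm y = 1" shows "grad3 (gamt gam) y \<bullet> y = gam y"
proof -
  have y0: "y \<noteq> 0" using y by auto
  have "grad3 (gamt gam) y \<bullet> y = pd (gamt gam) y y" using grad3_inner[OF dgamt[OF y0]] .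
  also have "\<dots> = gam y" using pd_gamt[OF y0, of y] pd_g0_radial[OF y0] y gam0_unit[OF y]
    by (simp add: power2_norm_eq_inner[symmetric])
  finally show ?thesis .
qed

lemma xi_nu: "p \<in> U \<Longrightarrow> xi gam X p \<bullet> nu X p = gam (nu X p)"
  unfolding xi_def using euler norm_nu by blast

lemma xi_tangent: assumes p: "p \<in> U"
  shows "pd (xi gam X) (axis k 1) p \<bullet> nu X p = 0"
proof -
  have e: "xi gam X q \<bullet> nu X q = gamt gam (nu X q)" if "q \<in> U" for q
    using xi_nu[OF that] gamt_unit[OF norm_nu[OF that]] by simp
  have "pd (\<lambda>q. xi gam X q \<bullet> nu X q) (axis k 1) p = pd (\<lambda>q. gamt gam (nu X q)) (axis k 1) p"
    using pd_cong_open[OF U_open p, of "\<lambda>q. xi gam X q \<bullet> nu X q" "\<lambda>q. gamt gam (nu X q)"] e by simp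
  moreover have "pd (\<lambda>q. xi gam X q \<bullet> nu X q) (axis k 1) p
      = xi gam X p \<bullet> pd (nu X) (axis k 1) p + pd (xi gam X) (axis k 1) p \<bullet> nu X p"
    using pd_inner[OF dxi[OF p] dnu[OF p]] .
  moreover have "pd (\<lambda>q. gamt gam (nu X q)) (axis k 1) p = xi gam X p \<bullet> pd (nu X) (axis k 1) p"
    using pd_chain[OF dnu[OF p] dgamt[OF nu_nz[OF p]]] grad3_inner[OF dgamt[OF nu_nz[OF p]]]
    by (simp add: xi_def)
  ultimately show ?thesis by simp
qed

lemma xi_tangent_nn: "p \<in> U \<Longrightarrow> pd (xi gam X) (axis k 1) p \<bullet> (Xd X 1 p \<times> Xd X 2 p) = 0"
  using xi_tangent[of p k] nn_nz[of p] unfolding nu_eq nn_def by simp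

end

lemma id1: fixes X xi a1 a2 x1 x2 :: "real^3"
  shows "(X \<times> x2 + a2 \<times> xi) \<bullet> a1 - (X \<times> x1 + a1 \<times> xi) \<bullet> a2 = 2 * (xi \<bullet> (a1 \<times> a2)) - X \<bullet> (x1 \<times> a2 + a1 \<times> x2)"
  by (simp add: cross3_simps)
lemma id2: fixes X xi a1 a2 x1 x2 :: "real^3"
  shows "(X \<times> x1 + a1 \<times> xi) \<bullet> x2 - (X \<times> x2 + a2 \<times> xi) \<bullet> x1 = 2 * (X \<bullet> (x1 \<times> x2)) - xi \<bullet> (x1 \<times> a2 + a1 \<times> x2)"
  by (simp add: cross3_simps)

context surf begin

lemma sdiv_cong: "p \<in> U \<Longrightarrow> (\<And>q. q \<in> U \<Longrightarrow> V q = V' q) \<Longrightarrow> sdiv X V p = sdiv X V' p"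
  unfolding sdiv_def using pd_cong_open[OF U_open, of p V V'] by simp

lemma tangent_repr_X: assumes p: "p \<in> U" and t: "x \<bullet> nn p = 0"
  shows "x = ((x \<bullet> R1 p) / DD p) *\<^sub>R Xd X 1 p + ((x \<bullet> R2 p) / DD p) *\<^sub>R Xd X 2 p"
proof -
  have "DD p \<noteq> 0" using DD_nz[OF p] .
  then show ?thesis
    using tangent_repr[of x "Xd X 1 p" "Xd X 2 p"] t
    unfolding DD_def R1_def R2_def g_def nn_def by (simp add: inner_commute)
qed

definition Yf :: "real^2 \<Rightarrow> real^3" where "Yf q = X q \<times> xi gam X q"

lemma W_eq: assumes q: "q \<in> U"
  shows "Jrot X q (tanpart X q (X q \<times> xi gam X q))
    = ((- (Yf q \<bullet> Xd X 2 q)) / norm (nn q)) *\<^sub>R Xd X 1 q - ((- (Yf q \<bullet> Xd X 1 q)) / norm (nn q)) *\<^sub>R Xd X 2 q"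
proof -
  have "Jrot X q (tanpart X q (Yf q)) = nu X q \<times> Yf q"
    unfolding Jrot_def tanpart_def by (simp add: Cross3.right_diff_distrib cross_mult_right)
  also have "\<dots> = inverse (norm (nn q)) *\<^sub>R (nn q \<times> Yf q)" by (simp add: nu_eq cross_mult_left)
  also have "nn q \<times> Yf q = (Xd X 1 q \<bullet> Yf q) *\<^sub>R Xd X 2 q - (Xd X 2 q \<bullet> Yf q) *\<^sub>R Xd X 1 q"
    unfolding nn_def bac_cab ..
  finally show ?thesis unfolding Yf_def
    by (simp add: inner_commute divide_inverse scaleR_diff_right algebra_simps)
qed

lemma dYf: "p \<in> U \<Longrightarrow> Yf differentiable (at p)"
proof -
  assume p: "p \<in> U"
  have "(\<lambda>q. X q \<times> xi gam X q) differentiable (at p)" using differentiable_cross[OF dX[OF p] dxi[OF p]] .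
  then show ?thesis unfolding Yf_def[abs_def] .
qed

lemma pd_Yf: "p \<in> U \<Longrightarrow> pd Yf (axis k 1) p = X p \<times> pd (xi gam X) (axis k 1) p + Xd X k p \<times> xi gam X p"
proof -
  assume p: "p \<in> U"
  have "pd (\<lambda>q. X q \<times> xi gam X q) (axis k 1) p = X p \<times> pd (xi gam X) (axis k 1) p + pd X (axis k 1) p \<times> xi gam X p"
    using pd_cross[OF dX[OF p] dxi[OF p]] .
  then show ?thesis unfolding Yf_def[abs_def] pdX .
qed

lemma Lam_eq: "p \<in> U \<Longrightarrow> Lam gam X p = - ((pd (xi gam X) (axis 1 1) p \<bullet> R1 p + pd (xi gam X) (axis 2 1) p \<bullet> R2 p) / DD p)"
  unfolding Lam_def using sdiv_eq by simp

lemma trace_xi: assumes p: "p \<in> U"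
  shows "pd (xi gam X) (axis 1 1) p \<times> Xd X 2 p + Xd X 1 p \<times> pd (xi gam X) (axis 2 1) p = - Lam gam X p *\<^sub>R nn p"
proof -
  let ?x1 = "pd (xi gam X) (axis 1 1) p" and ?x2 = "pd (xi gam X) (axis 2 1) p"
  have t1: "?x1 \<bullet> nn p = 0" and t2: "?x2 \<bullet> nn p = 0" using xi_tangent_nn[OF p] unfolding nn_def by auto
  have "?x1 \<times> Xd X 2 p + Xd X 1 p \<times> ?x2
     = ((?x1 \<bullet> R1 p) / DD p + (?x2 \<bullet> R2 p) / DD p) *\<^sub>R nn p"
    using cross_comb_trace[of "(?x1 \<bullet> R1 p) / DD p" "Xd X 1 p" "(?x1 \<bullet> R2 p) / DD p" "Xd X 2 p"
       "(?x2 \<bullet> R1 p) / DD p" "(?x2 \<bullet> R2 p) / DD p"]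
      tangent_repr_X[OF p t1] tangent_repr_X[OF p t2] unfolding nn_def by simp
  then show ?thesis using Lam_eq[OF p] by (simp add: add_divide_distrib)
qed

lemma first_identity: assumes p: "p \<in> U"
  shows "sdiv X (\<lambda>p. Jrot X p (tanpart X p (X p \<times> xi gam X p))) p = 2 * gam (nu X p) + Lam gam X p * supp X p"
proof -
  define f where "f = (\<lambda>q. - (Yf q \<bullet> Xd X 2 q))"
  define h where "h = (\<lambda>q. - (Yf q \<bullet> Xd X 1 q))"
  have df: "f differentiable (at p)" unfolding f_def
    using differentiable_minus[OF differentiable_inner[OF dYf[OF p] dXd[OF p]]] .
  have dh: "h differentiable (at p)" unfolding h_def
    using differentiable_minus[OF differentiable_inner[OF dYf[OF p] dXd[OF p]]] .
  have "sdiv X (\<lambda>p. Jrot X p (tanpart X p (X p \<times> xi gam X p))) p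
      = sdiv X (\<lambda>q. (f q / norm (nn q)) *\<^sub>R Xd X 1 q - (h q / norm (nn q)) *\<^sub>R Xd X 2 q) p"
  proof (rule sdiv_cong[OF p])
    fix q assume "q \<in> U"
    then show "Jrot X q (tanpart X q (X q \<times> xi gam X q)) = (f q / norm (nn q)) *\<^sub>R Xd X 1 q - (h q / norm (nn q)) *\<^sub>R Xd X 2 q"
      unfolding f_def h_def by (rule W_eq)
  qed
  also have "\<dots> = (pd f (axis 1 1) p - pd h (axis 2 1) p) / norm (nn p)"
    using div_rot[OF p df dh] .
  also have "pd f (axis 1 1) p - pd h (axis 2 1) p
     = pd Yf (axis 2 1) p \<bullet> Xd X 1 p - pd Yf (axis 1 1) p \<bullet> Xd X 2 p"
  proof -
    have a: "pd f (axis 1 1) p = - (Yf p \<bullet> pd (Xd X 2) (axis 1 1) p + pd Yf (axis 1 1) p \<bullet> Xd X 2 p)"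
      unfolding f_def using pd_minus[OF differentiable_inner[OF dYf[OF p] dXd[OF p]]] pd_inner[OF dYf[OF p] dXd[OF p]]
      by simp
    have b: "pd h (axis 2 1) p = - (Yf p \<bullet> pd (Xd X 1) (axis 2 1) p + pd Yf (axis 2 1) p \<bullet> Xd X 1 p)"
      unfolding h_def using pd_minus[OF differentiable_inner[OF dYf[OF p] dXd[OF p]]] pd_inner[OF dYf[OF p] dXd[OF p]]
      by simp
    show ?thesis unfolding a b X_sym[OF p] by simp
  qed
  also have "pd Yf (axis 2 1) p \<bullet> Xd X 1 p - pd Yf (axis 1 1) p \<bullet> Xd X 2 p
     = 2 * (xi gam X p \<bullet> nn p) + Lam gam X p * (X p \<bullet> nn p)"
  proof -
    let ?x1 = "pd (xi gam X) (axis 1 1) p" and ?x2 = "pd (xi gam X) (axis 2 1) p"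
    have e1: "pd Yf (axis 2 1) p \<bullet> Xd X 1 p - pd Yf (axis 1 1) p \<bullet> Xd X 2 p
       = 2 * (xi gam X p \<bullet> (Xd X 1 p \<times> Xd X 2 p)) - X p \<bullet> (?x1 \<times> Xd X 2 p + Xd X 1 p \<times> ?x2)"
      unfolding pd_Yf[OF p] by (rule id1)
    show ?thesis unfolding e1 trace_xi[OF p] nn_def by simp
  qed
  finally have "sdiv X (\<lambda>p. Jrot X p (tanpart X p (X p \<times> xi gam X p))) p
      = (2 * (xi gam X p \<bullet> nn p) + Lam gam X p * (X p \<bullet> nn p)) / norm (nn p)" .
  also have "\<dots> = 2 * (xi gam X p \<bullet> nu X p) + Lam gam X p * (X p \<bullet> nu X p)"
    unfolding nu_eq using nn_nz[OF p] by (simp add: field_simps)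
  finally show ?thesis using xi_nu[OF p] unfolding supp_def by simp
qed

end

lemma comb_vec:
  fixes a b :: "real^3"
  shows "(f * im) *\<^sub>R (\<alpha> *\<^sub>R a + \<beta> *\<^sub>R b) - (h * im) *\<^sub>R (\<gamma> *\<^sub>R a + \<delta> *\<^sub>R b)
       + (- (\<alpha> + \<delta>)) *\<^sub>R ((f * im) *\<^sub>R a - (h * im) *\<^sub>R b)
     = ((\<gamma> * (- h) + \<delta> * (- f)) * im) *\<^sub>R a - ((\<alpha> * (- h) + \<beta> * (- f)) * im) *\<^sub>R b"
  unfolding vec_eq_iff by (simp add: algebra_simps)

context surf begin

definition cc :: "2 \<Rightarrow> 2 \<Rightarrow> real^2 \<Rightarrow> real" where
  "cc i j p = (pd (xi gam X) (axis i 1) p \<bullet> (if j = 1 then R1 p else R2 p)) / DD p"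

lemma xi_repr: "p \<in> U \<Longrightarrow> pd (xi gam X) (axis i 1) p = cc i 1 p *\<^sub>R Xd X 1 p + cc i 2 p *\<^sub>R Xd X 2 p"
  unfolding cc_def using tangent_repr_X xi_tangent_nn unfolding nn_def by simp

lemma Lam_cc: "p \<in> U \<Longrightarrow> Lam gam X p = - (cc 1 1 p + cc 2 2 p)"
  unfolding cc_def using Lam_eq by (simp add: add_divide_distrib)

lemma Z_eq: assumes q: "q \<in> U"
  shows "dxi_apply gam X q (Jrot X q (tanpart X q (X q \<times> xi gam X q)))
           + Lam gam X q *\<^sub>R Jrot X q (tanpart X q (X q \<times> xi gam X q))
       = ((Yf q \<bullet> pd (xi gam X) (axis 2 1) q) / norm (nn q)) *\<^sub>R Xd X 1 q
         - ((Yf q \<bullet> pd (xi gam X) (axis 1 1) q) / norm (nn q)) *\<^sub>R Xd X 2 q"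
proof -
  define f where "f = - (Yf q \<bullet> Xd X 2 q)"
  define h where "h = - (Yf q \<bullet> Xd X 1 q)"
  define im where "im = inverse (norm (nn q))"
  have W: "Jrot X q (tanpart X q (X q \<times> xi gam X q)) = (f * im) *\<^sub>R Xd X 1 q - (h * im) *\<^sub>R Xd X 2 q"
    using W_eq[OF q] unfolding f_def h_def im_def by (simp add: divide_inverse)
  have D: "DD q \<noteq> 0" using DD_nz[OF q] .
  have "dxi_apply gam X q (Jrot X q (tanpart X q (X q \<times> xi gam X q)))
     = (f * im) *\<^sub>R pd (xi gam X) (axis 1 1) q - (h * im) *\<^sub>R pd (xi gam X) (axis 2 1) q"
    unfolding dxi_eq[OF q] W using D by (simp add: inner_diff_left orth)
  also have "\<dots> = (f * im) *\<^sub>R (cc 1 1 q *\<^sub>R Xd X 1 q + cc 1 2 q *\<^sub>R Xd X 2 q)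
                 - (h * im) *\<^sub>R (cc 2 1 q *\<^sub>R Xd X 1 q + cc 2 2 q *\<^sub>R Xd X 2 q)"
    using xi_repr[OF q] by simp
  finally have A: "dxi_apply gam X q (Jrot X q (tanpart X q (X q \<times> xi gam X q)))
      + Lam gam X q *\<^sub>R Jrot X q (tanpart X q (X q \<times> xi gam X q))
     = ((cc 2 1 q * (- h) + cc 2 2 q * (- f)) * im) *\<^sub>R Xd X 1 q - ((cc 1 1 q * (- h) + cc 1 2 q * (- f)) * im) *\<^sub>R Xd X 2 q"
    unfolding Lam_cc[OF q] W using comb_vec by simp
  have y2: "Yf q \<bullet> pd (xi gam X) (axis 2 1) q = cc 2 1 q * (- h) + cc 2 2 q * (- f)"
    unfolding xi_repr[OF q] f_def h_def by (simp add: inner_add_right)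
  have y1: "Yf q \<bullet> pd (xi gam X) (axis 1 1) q = cc 1 1 q * (- h) + cc 1 2 q * (- f)"
    unfolding xi_repr[OF q] f_def h_def by (simp add: inner_add_right)
  show ?thesis unfolding A y1 y2 im_def by (simp add: divide_inverse)
qed

end

lemma nnT_mv: "(\<chi> i j. n$i * n$j) *v w = (n \<bullet> (w::real^3)) *\<^sub>R n"
  by (simp add: vec_eq_iff matrix_vector_mult_def inner_vec_def sum_distrib_left mult_ac)

lemma projn_mv: "projn n *v w = w - (n \<bullet> w) *\<^sub>R n"
  unfolding projn_def by (simp add: matrix_vector_mult_diff_rdistrib nnT_mv)

lemma M_mv:
  "(projn n ** H0 ** projn n + c *\<^sub>R projn n + (\<chi> i j. n$i * n$j)) *v w
     = projn n *v (H0 *v (projn n *v w)) + c *\<^sub>R (projn n *v w) + (n \<bullet> w) *\<^sub>R n"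
  by (simp add: matrix_vector_mult_add_rdistrib matrix_vector_mul_assoc scaleR_matrix_vector_assoc nnT_mv matrix_mul_assoc)

lemma M_n: assumes "n \<bullet> n = 1"
  shows "(projn n ** H0 ** projn n + c *\<^sub>R projn n + (\<chi> i j. n$i * n$j)) *v n = n"
  unfolding M_mv projn_mv using assms by simp

lemma M_tan: assumes "n \<bullet> n = 1" "u \<bullet> n = 0" "w \<bullet> n = 0"
  shows "u \<bullet> ((projn n ** H0 ** projn n + c *\<^sub>R projn n + (\<chi> i j. n$i * n$j)) *v w)
    = u \<bullet> (H0 *v w) + c * (u \<bullet> w)"
  unfolding M_mv projn_mv using assms by (simp add: inner_diff_right inner_add_right inner_commute)

lemma M_nt: assumes "n \<bullet> n = 1" "w \<bullet> n = 0"
  shows "n \<bullet> ((projn n ** H0 ** projn n + c *\<^sub>R projn n + (\<chi> i j. n$i * n$j)) *v w) = 0"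
  unfolding M_mv projn_mv using assms by (simp add: inner_diff_right inner_add_right inner_commute)

lemma QMQ_entry: "((A::real^3^3) ** M ** transpose A) $ i $ j = A$i \<bullet> (M *v A$j)"
  by (simp add: matrix_matrix_mult_def transpose_def matrix_vector_mult_def inner_vec_def sum_3 algebra_simps)

lemma QQ_entry: "((A::real^3^3) ** transpose A) $ i $ j = A$i \<bullet> A$j"
  by (simp add: matrix_matrix_mult_def transpose_def inner_vec_def sum_3)

lemma det_block:
  fixes a b n :: "real^3" and M :: "real^3^3"
  assumes an: "a \<bullet> n = 0" and bn: "b \<bullet> n = 0" and nn: "n \<bullet> n = 1"
    and Mn: "M *v n = n" and nMa: "n \<bullet> (M *v a) = 0" and nMb: "n \<bullet> (M *v b) = 0"
  shows "(a \<bullet> (M *v a)) * (b \<bullet> (M *v b)) - (a \<bullet> (M *v b)) * (b \<bullet> (M *v a))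
       = ((a \<bullet> a) * (b \<bullet> b) - (a \<bullet> b) * (b \<bullet> a)) * det M"
proof -
  define Q :: "real^3^3" where "Q = vector [a, b, n]"
  have Q1: "Q$1 = a" and Q2: "Q$2 = b" and Q3: "Q$3 = n" unfolding Q_def by (simp_all add: vector_def)
  have "det (Q ** M ** transpose Q) = det Q * det M * det Q" by (simp add: det_mul)
  moreover have "det (Q ** M ** transpose Q)
      = (a \<bullet> (M *v a)) * (b \<bullet> (M *v b)) - (a \<bullet> (M *v b)) * (b \<bullet> (M *v a))"
    unfolding det_3 QMQ_entry Q1 Q2 Q3 Mn using an bn nn nMa nMb by (simp add: inner_commute)
  moreover have "det (Q ** transpose Q) = det Q * det Q" by (simp add: det_mul)
  moreover have "det (Q ** transpose Q) = (a \<bullet> a) * (b \<bullet> b) - (a \<bullet> b) * (b \<bullet> a)"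
    unfolding det_3 QQ_entry Q1 Q2 Q3 using an bn nn by (simp add: inner_commute)
  ultimately show ?thesis by (simp add: algebra_simps)
qed

lemma contract_lemma:
  fixes H H0 :: "real^3^3" and y a b u w :: "real^3"
  assumes "\<And>m k. H$m$k = (if m = k then 1 else 0) * A - y$m * y$k * A + y$k * a$m + y$m * b$k + H0$m$k"
  shows "u \<bullet> (H *v w) = (u \<bullet> w) * A - (u \<bullet> y) * (y \<bullet> w) * A + (y \<bullet> w) * (u \<bullet> a) + (u \<bullet> y) * (w \<bullet> b) + u \<bullet> (H0 *v w)"
  by (simp add: assms matrix_vector_mult_def inner_vec_def sum_3 algebra_simps)

lemma mv_row: "((A::real^3^3) *v w) $ m = A$m \<bullet> w"
  by (simp add: matrix_vector_mult_def inner_vec_def)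

context surf begin

lemma dpdg0: "y \<noteq> 0 \<Longrightarrow> (\<lambda>z. pd (gam0 gam) (axis k 1) z) differentiable (at y)"
proof -
  have "Ck (Suc (Suc 0)) (- {0}) (\<lambda>z. pd (gam0 gam) (axis k 1) z)"
    using Ck_pd[OF gam_C3[unfolded numeral_3_eq_3] axis_basis3[of k]] .
  from Ck_diff_at[OF this open_nz] show "y \<noteq> 0 \<Longrightarrow> ?thesis" by simp
qed

lemma dpdgamt: "y \<noteq> 0 \<Longrightarrow> (\<lambda>z. pd (gamt gam) (axis k 1) z) differentiable (at y)"
proof -
  have "Ck (Suc (Suc 0)) (- {0}) (\<lambda>z. pd (gamt gam) (axis k 1) z)"
    using Ck_pd[OF gamtCk[unfolded numeral_3_eq_3] axis_basis3[of k]] .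
  from Ck_diff_at[OF this open_nz] show "y \<noteq> 0 \<Longrightarrow> ?thesis" by simp
qed

lemma hess_gamt: assumes y1: "norm y = 1"
  shows "hess3 (gamt gam) y $ m $ k = (if m = k then 1 else 0) * gam0 gam y - y$m * y$k * gam0 gam y
     + y$k * pd (gam0 gam) (axis m 1) y + y$m * pd (gam0 gam) (axis k 1) y + hess3 (gam0 gam) y $ m $ k"
proof -
  have y: "y \<noteq> 0" using y1 by auto
  let ?g = "gam0 gam"
  define T where "T = (\<lambda>z. (z$k * inverse (norm z)) * ?g z + norm z * pd ?g (axis k 1) z)"
  have eq: "pd (gamt gam) (axis k 1) z = T z" if "z \<in> - {0}" for z
    using pd_gamt[of z "axis k 1"] that unfolding T_def by (simp add: inner_axis' divide_inverse)
  have "hess3 (gamt gam) y $ m $ k = pd (\<lambda>z. pd (gamt gam) (axis k 1) z) (axis m 1) y"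
    by (simp add: hess3_def)
  also have "\<dots> = pd T (axis m 1) y"
    using pd_cong_open[OF open_nz, of y "\<lambda>z. pd (gamt gam) (axis k 1) z" T] eq y by simp
  also have "\<dots> = (if m = k then 1 else 0) * ?g y - y$m * y$k * ?g y
     + y$k * pd ?g (axis m 1) y + y$m * pd ?g (axis k 1) y + hess3 ?g y $ m $ k"
  proof -
    have dc: "(\<lambda>z::real^3. z$k) differentiable (at y)" by (simp add: differentiable_nth)
    have pc: "pd (\<lambda>z::real^3. z$k) v y = v$k" for v
      by (rule pd_eq) (rule bounded_linear.has_derivative[OF bounded_linear_vec_nth has_derivative_ident, simplified])
    have hinv: "((\<lambda>z. inverse (norm z)) has_derivative (\<lambda>h. - (inverse (norm y) * (h \<bullet> y / norm y) * inverse (norm y)))) (at y)"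
      using Deriv.has_derivative_inverse[of norm y, OF _ pd_has[OF differentiable_norm_at[OF y]]] y pd_norm[OF y]
      by simp
    have di: "(\<lambda>z. inverse (norm z)) differentiable (at y)" using hinv unfolding differentiable_def by blast
    have pi: "pd (\<lambda>z. inverse (norm z)) v y = - (v \<bullet> y)" for v using pd_eq[OF hinv] y1 by simp
    have d1: "(\<lambda>z. z$k * inverse (norm z)) differentiable (at y)" using dc di by simp
    have dT1: "(\<lambda>z. (z$k * inverse (norm z)) * ?g z) differentiable (at y)" using d1 dg0[OF y] by simp
    have dT2: "(\<lambda>z. norm z * pd ?g (axis k 1) z) differentiable (at y)"
      using differentiable_norm_at[OF y] dpdg0[OF y] by simp
    have "pd T (axis m 1) y = pd (\<lambda>z. (z$k * inverse (norm z)) * ?g z) (axis m 1) y + pd (\<lambda>z. norm z * pd ?g (axis k 1) z) (axis m 1) y"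
      unfolding T_def using pd_add[OF dT1 dT2] .
    also have "pd (\<lambda>z. (z$k * inverse (norm z)) * ?g z) (axis m 1) y
       = (y$k * inverse (norm y)) * pd ?g (axis m 1) y + pd (\<lambda>z. z$k * inverse (norm z)) (axis m 1) y * ?g y"
      using pd_mult[OF d1 dg0[OF y]] .
    also have "pd (\<lambda>z. z$k * inverse (norm z)) (axis m 1) y = y$k * (- (axis m 1 \<bullet> y)) + (axis m 1 :: real^3)$k * inverse (norm y)"
      using pd_mult[OF dc di] pc pi by simp
    also have "pd (\<lambda>z. norm z * pd ?g (axis k 1) z) (axis m 1) y
       = norm y * pd (\<lambda>z. pd ?g (axis k 1) z) (axis m 1) y + pd norm (axis m 1) y * pd ?g (axis k 1) y"
      using pd_mult[OF differentiable_norm_at[OF y] dpdg0[OF y]] .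
    also have "pd (\<lambda>z. pd ?g (axis k 1) z) (axis m 1) y = hess3 ?g y $ m $ k" by (simp add: hess3_def)
    moreover have ax1: "axis m 1 \<bullet> y = y$m" by (simp add: inner_axis')
    moreover have ax2: "(axis m (1::real) :: real^3) $ k = (if m = k then 1 else 0)" by (simp add: axis_def)
    ultimately show ?thesis using y1 pd_norm[OF y, of "axis m 1"]
      by (simp add: algebra_simps)
  qed
  finally show ?thesis .
qed

end

context surf begin

lemma dgrad: "y \<noteq> 0 \<Longrightarrow> grad3 (gamt gam) differentiable (at y)"
  using Ck_diff_at[OF gradCk[unfolded numeral_2_eq_2] open_nz] by simp

lemma pd_grad_axis: "y \<noteq> 0 \<Longrightarrow> pd (grad3 (gamt gam)) (axis m 1) y = hess3 (gamt gam) y $ m"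
proof -
  assume y: "y \<noteq> 0"
  have "pd (grad3 (gamt gam)) (axis m 1) y = pd (\<lambda>x. \<chi> k. pd (gamt gam) (axis k 1) x) (axis m 1) y"
    by (simp add: grad3_eq)
  also have "\<dots> = (\<chi> k. pd (\<lambda>x. pd (gamt gam) (axis k 1) x) (axis m 1) y)"
    by (rule pd_vec3) (rule dpdgamt[OF y])
  also have "\<dots> = hess3 (gamt gam) y $ m" by (simp add: hess3_def)
  finally show ?thesis .
qed

lemma xi_hess: assumes p: "p \<in> U"
  shows "pd (xi gam X) (axis i 1) p \<bullet> w = pd (nu X) (axis i 1) p \<bullet> (hess3 (gamt gam) (nu X p) *v w)"
proof -
  let ?N = "pd (nu X) (axis i 1) p" and ?H = "hess3 (gamt gam) (nu X p)"
  have y: "nu X p \<noteq> 0" using nu_nz[OF p] .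
  have "pd (xi gam X) (axis i 1) p = pd (\<lambda>q. grad3 (gamt gam) (nu X q)) (axis i 1) p" by (simp add: xi_eq)
  also have "\<dots> = pd (grad3 (gamt gam)) ?N (nu X p)" using pd_chain[OF dnu[OF p] dgrad[OF y]] .
  also have "\<dots> = (\<Sum>m\<in>UNIV. ?N$m *\<^sub>R pd (grad3 (gamt gam)) (axis m 1) (nu X p))"
    using pd_expand3[OF dgrad[OF y]] .
  also have "\<dots> = (\<Sum>m\<in>UNIV. ?N$m *\<^sub>R ?H$m)" using pd_grad_axis[OF y] by simp
  finally have e: "pd (xi gam X) (axis i 1) p = (\<Sum>m\<in>UNIV. ?N$m *\<^sub>R ?H$m)" .
  show ?thesis unfolding e by (simp add: sum_3 inner_vec_def[of ?N] mv_row inner_add_left)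
qed

lemma N_tangent: assumes p: "p \<in> U" shows "pd (nu X) (axis i 1) p \<bullet> nu X p = 0"
proof -
  have e: "nu X q \<bullet> nu X q = 1" if "q \<in> U" for q using norm_nu[OF that] by (simp add: norm_eq_1)
  have "pd (\<lambda>q. nu X q \<bullet> nu X q) (axis i 1) p = pd (\<lambda>q. 1::real) (axis i 1) p"
    using pd_cong_open[OF U_open p, of "\<lambda>q. nu X q \<bullet> nu X q" "\<lambda>q. 1"] e by simp
  moreover have "pd (\<lambda>q. nu X q \<bullet> nu X q) (axis i 1) p = 2 * (pd (nu X) (axis i 1) p \<bullet> nu X p)"
    using pd_inner[OF dnu[OF p] dnu[OF p]] by (simp add: inner_commute)
  ultimately show ?thesis by simp
qed

lemma Xd_nu: "p \<in> U \<Longrightarrow> Xd X i p \<bullet> nu X p = 0"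
proof -
  have "Xd X j p \<bullet> (Xd X 1 p \<times> Xd X 2 p) = 0" for j
    using exhaust_2[of j] by (auto simp: dot_cross_self)
  then show ?thesis by (simp add: nu_eq nn_def)
qed

end

lemma det2_prod: "(a11 * g11 + a12 * g21) * (a21 * g12 + a22 * g22) - (a11 * g12 + a12 * g22) * (a21 * g11 + a22 * g21)
   = (a11 * a22 - a12 * a21) * (g11 * g22 - g12 * (g21::real))"
  by (simp add: algebra_simps)

context surf begin

lemma det_main_proof: assumes p: "p \<in> U"
  shows "cc 1 1 p * cc 2 2 p - cc 1 2 p * cc 2 1 p = gauss_curv X p / KW gam (nu X p)"
proof -
  define \<nu> where "\<nu> = nu X p"
  define H where "H = hess3 (gamt gam) \<nu>"
  define H0 where "H0 = hess3 (gam0 gam) \<nu>"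
  define M where "M = projn \<nu> ** H0 ** projn \<nu> + gam \<nu> *\<^sub>R projn \<nu> + (\<chi> i j. \<nu> $ i * \<nu> $ j)"
  have nu1: "norm \<nu> = 1" unfolding \<nu>_def using norm_nu[OF p] .
  have nunu: "\<nu> \<bullet> \<nu> = 1" using nu1 by (simp add: norm_eq_1)
  have detM: "det_hess_gam gam \<nu> = det M" unfolding det_hess_gam_def M_def H0_def ..
  have HM: "u \<bullet> (H *v w) = u \<bullet> (M *v w)" if u: "u \<bullet> \<nu> = 0" and w: "w \<bullet> \<nu> = 0" for u w
  proof -
    have "u \<bullet> (H *v w) = (u \<bullet> w) * gam0 gam \<nu> - (u \<bullet> \<nu>) * (\<nu> \<bullet> w) * gam0 gam \<nu>
        + (\<nu> \<bullet> w) * (u \<bullet> (\<chi> m. pd (gam0 gam) (axis m 1) \<nu>)) + (u \<bullet> \<nu>) * (w \<bullet> (\<chi> m. pd (gam0 gam) (axis m 1) \<nu>))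
        + u \<bullet> (H0 *v w)"
      by (rule contract_lemma) (simp add: H_def H0_def hess_gamt[OF nu1])
    also have "\<dots> = u \<bullet> (H0 *v w) + gam \<nu> * (u \<bullet> w)"
      using u w gam0_unit[OF nu1] by (simp add: inner_commute)
    also have "\<dots> = u \<bullet> (M *v w)" unfolding M_def using M_tan[OF nunu u w] by simp
    finally show ?thesis .
  qed
  define X1 where "X1 = Xd X 1 p"
  define X2 where "X2 = Xd X 2 p"
  have X1n: "X1 \<bullet> \<nu> = 0" and X2n: "X2 \<bullet> \<nu> = 0" unfolding X1_def X2_def \<nu>_def using Xd_nu[OF p] by auto
  define N1 where "N1 = pd (nu X) (axis 1 1) p"
  define N2 where "N2 = pd (nu X) (axis 2 1) p"
  have N1n: "N1 \<bullet> \<nu> = 0" and N2n: "N2 \<bullet> \<nu> = 0" unfolding N1_def N2_def \<nu>_def using N_tangent[OF p] by auto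
  have Nnn: "x \<bullet> nn p = 0" if "x \<bullet> \<nu> = 0" for x
  proof -
    have "x \<bullet> nn p = norm (nn p) * (x \<bullet> \<nu>)" unfolding \<nu>_def nu_eq using nn_nz[OF p] by simp
    then show ?thesis using that by simp
  qed
  define s11 where "s11 = (N1 \<bullet> R1 p) / DD p"
  define s12 where "s12 = (N1 \<bullet> R2 p) / DD p"
  define s21 where "s21 = (N2 \<bullet> R1 p) / DD p"
  define s22 where "s22 = (N2 \<bullet> R2 p) / DD p"
  have N1r: "N1 = s11 *\<^sub>R X1 + s12 *\<^sub>R X2" unfolding s11_def s12_def X1_def X2_def
    using tangent_repr_X[OF p Nnn[OF N1n]] .
  have N2r: "N2 = s21 *\<^sub>R X1 + s22 *\<^sub>R X2" unfolding s21_def s22_def X1_def X2_def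
    using tangent_repr_X[OF p Nnn[OF N2n]] .
  define B11 where "B11 = X1 \<bullet> (M *v X1)"
  define B12 where "B12 = X1 \<bullet> (M *v X2)"
  define B21 where "B21 = X2 \<bullet> (M *v X1)"
  define B22 where "B22 = X2 \<bullet> (M *v X2)"
  define g11 where "g11 = X1 \<bullet> X1"
  define g12 where "g12 = X1 \<bullet> X2"
  define g22 where "g22 = X2 \<bullet> X2"
  have DDg: "DD p = g11 * g22 - g12 * g12" unfolding DD_def g_def g11_def g12_def g22_def X1_def X2_def ..
  have Dnz: "g11 * g22 - g12 * g12 \<noteq> 0" using DD_nz[OF p] DDg by simp
  \<comment> \<open>E_ij = xi_i . X_j, two ways\<close>
  have E: "pd (xi gam X) (axis i 1) p \<bullet> w = (if i = 1 then N1 else N2) \<bullet> (M *v w)" if "w \<bullet> \<nu> = 0" "i = 1 \<or> i = 2" for i w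
    using xi_hess[OF p, of i w] HM[of "if i = 1 then N1 else N2" w] that N1n N2n
    unfolding N1_def N2_def H_def \<nu>_def by auto
  have xr: "pd (xi gam X) (axis i 1) p = cc i 1 p *\<^sub>R X1 + cc i 2 p *\<^sub>R X2" for i
    unfolding X1_def X2_def using xi_repr[OF p] .
  have A1: "(cc 1 1 p * g11 + cc 1 2 p * g12) * (cc 2 1 p * g12 + cc 2 2 p * g22)
          - (cc 1 1 p * g12 + cc 1 2 p * g22) * (cc 2 1 p * g11 + cc 2 2 p * g12)
          = (s11 * B11 + s12 * B21) * (s21 * B12 + s22 * B22) - (s11 * B12 + s12 * B22) * (s21 * B11 + s22 * B21)"
  proof -
    have e11: "cc 1 1 p * g11 + cc 1 2 p * g12 = s11 * B11 + s12 * B21"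
      using E[OF X1n, of 1] xr[of 1] N1r unfolding g11_def g12_def B11_def B21_def
      by (simp add: inner_add_left inner_add_right inner_commute)
    have e12: "cc 1 1 p * g12 + cc 1 2 p * g22 = s11 * B12 + s12 * B22"
      using E[OF X2n, of 1] xr[of 1] N1r unfolding g12_def g22_def B12_def B22_def
      by (simp add: inner_add_left inner_add_right inner_commute)
    have e21: "cc 2 1 p * g11 + cc 2 2 p * g12 = s21 * B11 + s22 * B21"
      using E[OF X1n, of 2] xr[of 2] N2r unfolding g11_def g12_def B11_def B21_def
      by (simp add: inner_add_left inner_add_right inner_commute)
    have e22: "cc 2 1 p * g12 + cc 2 2 p * g22 = s21 * B12 + s22 * B22"
      using E[OF X2n, of 2] xr[of 2] N2r unfolding g12_def g22_def B12_def B22_def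
      by (simp add: inner_add_left inner_add_right inner_commute)
    show ?thesis unfolding e11 e12 e21 e22 by simp
  qed
  have A2: "(cc 1 1 p * g11 + cc 1 2 p * g12) * (cc 2 1 p * g12 + cc 2 2 p * g22)
          - (cc 1 1 p * g12 + cc 1 2 p * g22) * (cc 2 1 p * g11 + cc 2 2 p * g12)
          = (cc 1 1 p * cc 2 2 p - cc 1 2 p * cc 2 1 p) * (g11 * g22 - g12 * g12)"
    using det2_prod by simp
  have A3: "(s11 * B11 + s12 * B21) * (s21 * B12 + s22 * B22) - (s11 * B12 + s12 * B22) * (s21 * B11 + s22 * B21)
          = (s11 * s22 - s12 * s21) * (B11 * B22 - B12 * B21)"
    using det2_prod by simp
  have Bdet: "B11 * B22 - B12 * B21 = (g11 * g22 - g12 * g12) * det M"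
  proof -
    have Mn: "M *v \<nu> = \<nu>" unfolding M_def using M_n[OF nunu] .
    have nM1: "\<nu> \<bullet> (M *v X1) = 0" unfolding M_def using M_nt[OF nunu X1n] .
    have nM2: "\<nu> \<bullet> (M *v X2) = 0" unfolding M_def using M_nt[OF nunu X2n] .
    show ?thesis using det_block[OF X1n X2n nunu Mn nM1 nM2]
      unfolding B11_def B12_def B21_def B22_def g11_def g12_def g22_def by (simp add: inner_commute)
  qed
  have K: "gauss_curv X p = s11 * s22 - s12 * s21"
  proof -
    have n11: "N1 \<bullet> X1 = s11 * g11 + s12 * g12" unfolding N1r g11_def g12_def by (simp add: inner_add_left inner_add_right inner_commute)
    have n12: "N1 \<bullet> X2 = s11 * g12 + s12 * g22" unfolding N1r g12_def g22_def by (simp add: inner_add_left inner_add_right inner_commute)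
    have n21: "N2 \<bullet> X1 = s21 * g11 + s22 * g12" unfolding N2r g11_def g12_def by (simp add: inner_add_left inner_add_right inner_commute)
    have n22: "N2 \<bullet> X2 = s21 * g12 + s22 * g22" unfolding N2r g12_def g22_def by (simp add: inner_add_left inner_add_right inner_commute)
    have dg: "det (gmat X p) = g11 * g22 - g12 * g12"
      unfolding det_2 gmat_def g11_def g12_def g22_def X1_def X2_def by (simp add: inner_commute)
    have "det (\<chi> i j. - (pd (nu X) (axis i 1) p \<bullet> Xd X j p))
        = (N1 \<bullet> X1) * (N2 \<bullet> X2) - (N1 \<bullet> X2) * (N2 \<bullet> X1)"
      unfolding det_2 N1_def N2_def X1_def X2_def by simp
    also have "\<dots> = (s11 * s22 - s12 * s21) * (g11 * g22 - g12 * g12)"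
      unfolding n11 n12 n21 n22 by (simp add: algebra_simps)
    finally show ?thesis unfolding gauss_curv_def dg using Dnz by simp
  qed
  have "(cc 1 1 p * cc 2 2 p - cc 1 2 p * cc 2 1 p) * (g11 * g22 - g12 * g12)
      = ((s11 * s22 - s12 * s21) * det M) * (g11 * g22 - g12 * g12)"
    using A1 A2 A3 Bdet by (simp add: algebra_simps)
  then have "cc 1 1 p * cc 2 2 p - cc 1 2 p * cc 2 1 p = (s11 * s22 - s12 * s21) * det M"
    using Dnz by simp
  then show ?thesis unfolding K KW_def detM[symmetric] \<nu>_def by simp
qed

end

context surf begin

lemma second_identity: assumes p: "p \<in> U" and c: "\<exists>c. \<forall>p\<in>U. Lam gam X p = c"
  shows "sdiv X (\<lambda>p. dxi_apply gam X p (Jrot X p (tanpart X p (X p \<times> xi gam X p)))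
                              + Lam gam X p *\<^sub>R Jrot X p (tanpart X p (X p \<times> xi gam X p))) p
                 = 2 * supp X p * gauss_curv X p / KW gam (nu X p) + Lam gam X p * gam (nu X p)"
proof -
  define f where "f = (\<lambda>q. Yf q \<bullet> pd (xi gam X) (axis 2 1) q)"
  define h where "h = (\<lambda>q. Yf q \<bullet> pd (xi gam X) (axis 1 1) q)"
  have df: "f differentiable (at p)" unfolding f_def
    using differentiable_inner[OF dYf[OF p] dxi1[OF p]] .
  have dh: "h differentiable (at p)" unfolding h_def
    using differentiable_inner[OF dYf[OF p] dxi1[OF p]] .
  have "sdiv X (\<lambda>p. dxi_apply gam X p (Jrot X p (tanpart X p (X p \<times> xi gam X p)))
                              + Lam gam X p *\<^sub>R Jrot X p (tanpart X p (X p \<times> xi gam X p))) p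
      = sdiv X (\<lambda>q. (f q / norm (nn q)) *\<^sub>R Xd X 1 q - (h q / norm (nn q)) *\<^sub>R Xd X 2 q) p"
  proof (rule sdiv_cong[OF p])
    fix q assume "q \<in> U"
    then show "dxi_apply gam X q (Jrot X q (tanpart X q (X q \<times> xi gam X q)))
                              + Lam gam X q *\<^sub>R Jrot X q (tanpart X q (X q \<times> xi gam X q))
        = (f q / norm (nn q)) *\<^sub>R Xd X 1 q - (h q / norm (nn q)) *\<^sub>R Xd X 2 q"
      unfolding f_def h_def by (rule Z_eq)
  qed
  also have "\<dots> = (pd f (axis 1 1) p - pd h (axis 2 1) p) / norm (nn p)"
    using div_rot[OF p df dh] .
  also have "pd f (axis 1 1) p - pd h (axis 2 1) p
     = pd Yf (axis 1 1) p \<bullet> pd (xi gam X) (axis 2 1) p - pd Yf (axis 2 1) p \<bullet> pd (xi gam X) (axis 1 1) p"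
  proof -
    have a: "pd f (axis 1 1) p = Yf p \<bullet> pd (\<lambda>q. pd (xi gam X) (axis 2 1) q) (axis 1 1) p
                                + pd Yf (axis 1 1) p \<bullet> pd (xi gam X) (axis 2 1) p"
      unfolding f_def using pd_inner[OF dYf[OF p] dxi1[OF p]] .
    have b: "pd h (axis 2 1) p = Yf p \<bullet> pd (\<lambda>q. pd (xi gam X) (axis 1 1) q) (axis 2 1) p
                                + pd Yf (axis 2 1) p \<bullet> pd (xi gam X) (axis 1 1) p"
      unfolding h_def using pd_inner[OF dYf[OF p] dxi1[OF p]] .
    show ?thesis unfolding a b xi_sym[OF p] by simp
  qed
  also have "pd Yf (axis 1 1) p \<bullet> pd (xi gam X) (axis 2 1) p - pd Yf (axis 2 1) p \<bullet> pd (xi gam X) (axis 1 1) p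
     = 2 * ((cc 1 1 p * cc 2 2 p - cc 1 2 p * cc 2 1 p) * (X p \<bullet> nn p)) + Lam gam X p * (xi gam X p \<bullet> nn p)"
  proof -
    let ?x1 = "pd (xi gam X) (axis 1 1) p" and ?x2 = "pd (xi gam X) (axis 2 1) p"
    have e: "pd Yf (axis 1 1) p \<bullet> ?x2 - pd Yf (axis 2 1) p \<bullet> ?x1
       = 2 * (X p \<bullet> (?x1 \<times> ?x2)) - xi gam X p \<bullet> (?x1 \<times> Xd X 2 p + Xd X 1 p \<times> ?x2)"
      unfolding pd_Yf[OF p] by (rule id2)
    have dt: "?x1 \<times> ?x2 = (cc 1 1 p * cc 2 2 p - cc 1 2 p * cc 2 1 p) *\<^sub>R nn p"
      unfolding nn_def using xi_repr[OF p, of 1] xi_repr[OF p, of 2] cross_comb_det by metis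
    show ?thesis unfolding e trace_xi[OF p] dt by simp
  qed
  finally have "sdiv X (\<lambda>p. dxi_apply gam X p (Jrot X p (tanpart X p (X p \<times> xi gam X p)))
                              + Lam gam X p *\<^sub>R Jrot X p (tanpart X p (X p \<times> xi gam X p))) p
     = (2 * ((cc 1 1 p * cc 2 2 p - cc 1 2 p * cc 2 1 p) * (X p \<bullet> nn p)) + Lam gam X p * (xi gam X p \<bullet> nn p))
        / norm (nn p)" .
  also have "\<dots> = 2 * ((cc 1 1 p * cc 2 2 p - cc 1 2 p * cc 2 1 p) * (X p \<bullet> nu X p)) + Lam gam X p * (xi gam X p \<bullet> nu X p)"
    unfolding nu_eq using nn_nz[OF p] by (simp add: field_simps)
  finally show ?thesis unfolding det_main_proof[OF p] xi_nu[OF p] supp_def by simp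
qed

end

theorem lemma0p3:
  fixes X :: "real^2 \<Rightarrow> real^3" and U :: "(real^2) set" and gam :: "real^3 \<Rightarrow> real"
  assumes U_open: "open U"
    and X_smooth: "smooth_on U X"
    and immersion: "\<forall>p\<in>U. Xd X 1 p \<times> Xd X 2 p \<noteq> 0"
    and gam_pos: "\<forall>n. norm n = 1 \<longrightarrow> gam n > 0"
    and gam_C3: "Ck 3 (- {0}) (gam0 gam)"
  shows "(\<forall>p\<in>U. sdiv X (\<lambda>p. Jrot X p (tanpart X p (X p \<times> xi gam X p))) p
              = 2 * gam (nu X p) + Lam gam X p * supp X p)
       \<and> ((\<exists>c. \<forall>p\<in>U. Lam gam X p = c) \<longrightarrow>
          (\<forall>p\<in>U. sdiv X (\<lambda>p. dxi_apply gam X p (Jrot X p (tanpart X p (X p \<times> xi gam X p)))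
                              + Lam gam X p *\<^sub>R Jrot X p (tanpart X p (X p \<times> xi gam X p))) p
                 = 2 * supp X p * gauss_curv X p / KW gam (nu X p) + Lam gam X p * gam (nu X p)))"
  proof -
  interpret surf X U gam
    by (unfold_locales) (fact U_open, fact X_smooth, fact immersion, fact gam_C3)
  show ?thesis using first_identity second_identity by blast
qed

end
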